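(* Let $L$ be the $S$-glued sum of an $S$-glued system $(L_x)_{x\in S}$, let $L'$ be a lattice (join $+$, meet $\cdot$), and let $\varphi_x:L_x\to L'$ ($x\in S$) be lattice homomorphisms such that $\varphi_x$ and $\varphi_y$ agree on $L_x\cap L_y$ whenever $x\prec y$ in $S$. Assume that either $S$ is modular, or for all $x,y\in S$: $\varphi_x(0_x)+\varphi_y(0_y)=\varphi_{x\vee y}(0_{x\vee y})$ and $\varphi_x(1_x)\cdot\varphi_y(1_y)=\varphi_{x\wedge y}(1_{x\wedge y})$. Then $\varphi:=\bigcup_{x\in S}\varphi_x$ is a well-defined map $L\to L'$ and is a lattice homomorphism; if every $\varphi_x$ is injective, then $\varphi$ is injective.
   Context: Let $S$ be a lattice of finite length (every chain in $S$ is finite), with order $\le$, join $\vee$ and meet $\wedge$; $x\prec y$ means that $y$ covers $x$. An \emph{$S$-glued system} is a family $(L_x,\le_x)_{x\in S}$ of lattices of finite length (with join $+_x$, meet $\cdot_x$, least element $0_x$, greatest element $1_x$), whose underlying sets may overlap, such that for all $x,y\in S$: (1) if $x\le y$ and $L_x\cap L_y\ne\emptyset$, then $L_x\cap L_y$ is a filter of $L_x$ and an ideal of $L_y$; (2) in the situation of (1), for all $a,b\in L_x\cap L_y$: $a\le_x b$ iff $a\le_y b$; (3) if $x\prec y$ then $L_x\cap L_y\ne\emptyset$; (4) $L_x\cap L_y\subseteq L_{x\wedge y}\cap L_{x\vee y}$. The \emph{$S$-glued sum} of the system is the set $L=\bigcup_{x\in S}L_x$ equipped with the relation $\le$ defined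 as the transitive closure of $\bigcup_{x\in S}\le_x$; it is a lattice. *)

theory Defs
  imports Main
begin

text \<open>Lattices given as a carrier set A with an order relation le (only meaningful on A).\<close>

definition is_join :: "'a set \<Rightarrow> ('a \<Rightarrow> 'a \<Rightarrow> bool) \<Rightarrow> 'a \<Rightarrow> 'a \<Rightarrow> 'a \<Rightarrow> bool" where
  "is_join A le a b c \<longleftrightarrow> c \<in> A \<and> le a c \<and> le b c \<and> (\<forall>d\<in>A. le a d \<and> le b d \<longrightarrow> le c d)"

definition is_meet :: "'a set \<Rightarrow> ('a \<Rightarrow> 'a \<Rightarrow> bool) \<Rightarrow> 'a \<Rightarrow> 'a \<Rightarrow> 'a \<Rightarrow> bool" where
  "is_meet A le a b c \<longleftrightarrow> c \<in> A \<and> le c a \<and> le c b \<and> (\<forall>d\<in>A. le d a \<and> le d b \<longrightarrow> le d c)"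

definition ljoin :: "'a set \<Rightarrow> ('a \<Rightarrow> 'a \<Rightarrow> bool) \<Rightarrow> 'a \<Rightarrow> 'a \<Rightarrow> 'a" where
  "ljoin A le a b = (THE c. is_join A le a b c)"

definition lmeet :: "'a set \<Rightarrow> ('a \<Rightarrow> 'a \<Rightarrow> bool) \<Rightarrow> 'a \<Rightarrow> 'a \<Rightarrow> 'a" where
  "lmeet A le a b = (THE c. is_meet A le a b c)"

definition is_lattice :: "'a set \<Rightarrow> ('a \<Rightarrow> 'a \<Rightarrow> bool) \<Rightarrow> bool" where
  "is_lattice A le \<longleftrightarrow>
     (\<forall>a\<in>A. le a a) \<and>
     (\<forall>a\<in>A. \<forall>b\<in>A. le a b \<and> le b a \<longrightarrow> a = b) \<and>
     (\<forall>a\<in>A. \<forall>b\<in>A. \<forall>c\<in>A. le a b \<and> le b c \<longrightarrow> le a c) \<and>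
     (\<forall>a\<in>A. \<forall>b\<in>A. (\<exists>c. is_join A le a b c) \<and> (\<exists>c. is_meet A le a b c))"

definition fin_length_lattice :: "'a set \<Rightarrow> ('a \<Rightarrow> 'a \<Rightarrow> bool) \<Rightarrow> bool" where
  "fin_length_lattice A le \<longleftrightarrow> is_lattice A le \<and> A \<noteq> {} \<and>
     (\<forall>C. C \<subseteq> A \<and> Complete_Partial_Order.chain le C \<longrightarrow> finite C)"

definition lbot :: "'a set \<Rightarrow> ('a \<Rightarrow> 'a \<Rightarrow> bool) \<Rightarrow> 'a" where
  "lbot A le = (THE a. a \<in> A \<and> (\<forall>b\<in>A. le a b))"

definition ltop :: "'a set \<Rightarrow> ('a \<Rightarrow> 'a \<Rightarrow> bool) \<Rightarrow> 'a" where
  "ltop A le = (THE a. a \<in> A \<and> (\<forall>b\<in>A. le b a))"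

definition is_filter :: "'a set \<Rightarrow> ('a \<Rightarrow> 'a \<Rightarrow> bool) \<Rightarrow> 'a set \<Rightarrow> bool" where
  "is_filter A le F \<longleftrightarrow> F \<subseteq> A \<and> F \<noteq> {} \<and>
     (\<forall>a\<in>F. \<forall>b\<in>A. le a b \<longrightarrow> b \<in> F) \<and> (\<forall>a\<in>F. \<forall>b\<in>F. lmeet A le a b \<in> F)"

definition is_ideal :: "'a set \<Rightarrow> ('a \<Rightarrow> 'a \<Rightarrow> bool) \<Rightarrow> 'a set \<Rightarrow> bool" where
  "is_ideal A le I \<longleftrightarrow> I \<subseteq> A \<and> I \<noteq> {} \<and>
     (\<forall>a\<in>I. \<forall>b\<in>A. le b a \<longrightarrow> b \<in> I) \<and> (\<forall>a\<in>I. \<forall>b\<in>I. ljoin A le a b \<in> I)"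

definition lattice_hom :: "'a set \<Rightarrow> ('a \<Rightarrow> 'a \<Rightarrow> bool) \<Rightarrow> ('a \<Rightarrow> 'b::lattice) \<Rightarrow> bool" where
  "lattice_hom A le f \<longleftrightarrow> (\<forall>a\<in>A. \<forall>b\<in>A.
     f (ljoin A le a b) = sup (f a) (f b) \<and> f (lmeet A le a b) = inf (f a) (f b))"

definition covers :: "'i::order \<Rightarrow> 'i \<Rightarrow> bool" (infix "\<prec>" 50) where
  "x \<prec> y \<longleftrightarrow> x < y \<and> \<not> (\<exists>z. x < z \<and> z < y)"

definition fin_length_type :: "'i::order itself \<Rightarrow> bool" where
  "fin_length_type _ \<longleftrightarrow> (\<forall>C::'i set. Complete_Partial_Order.chain (\<le>) C \<longrightarrow> finite C)"

definition modular_lattice :: "'i::lattice itself \<Rightarrow> bool" where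
  "modular_lattice _ \<longleftrightarrow> (\<forall>x y z::'i. x \<le> z \<longrightarrow> sup x (inf y z) = inf (sup x y) z)"

definition glued_system :: "('i::lattice \<Rightarrow> 'a set) \<Rightarrow> ('i \<Rightarrow> 'a \<Rightarrow> 'a \<Rightarrow> bool) \<Rightarrow> bool" where
  "glued_system L le \<longleftrightarrow>
     (\<forall>x. fin_length_lattice (L x) (le x)) \<and>
     (\<forall>x y. x \<le> y \<and> L x \<inter> L y \<noteq> {} \<longrightarrow>
        is_filter (L x) (le x) (L x \<inter> L y) \<and> is_ideal (L y) (le y) (L x \<inter> L y)) \<and>
     (\<forall>x y. x \<le> y \<and> L x \<inter> L y \<noteq> {} \<longrightarrow>
        (\<forall>a\<in>L x \<inter> L y. \<forall>b\<in>L x \<inter> L y. le x a b \<longleftrightarrow> le y a b)) \<and>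
     (\<forall>x y. x \<prec> y \<longrightarrow> L x \<inter> L y \<noteq> {}) \<and>
     (\<forall>x y. L x \<inter> L y \<subseteq> L (inf x y) \<inter> L (sup x y))"

definition glued_carrier :: "('i \<Rightarrow> 'a set) \<Rightarrow> 'a set" where
  "glued_carrier L = (\<Union>x. L x)"

definition glued_le :: "('i \<Rightarrow> 'a set) \<Rightarrow> ('i \<Rightarrow> 'a \<Rightarrow> 'a \<Rightarrow> bool) \<Rightarrow> 'a \<Rightarrow> 'a \<Rightarrow> bool" where
  "glued_le L le = (\<lambda>a b. \<exists>x. a \<in> L x \<and> b \<in> L x \<and> le x a b)\<^sup>+\<^sup>+"

end

theory Submission
  imports Defs "HOL-Library.Dual_Ordered_Lattice"
begin

lemma chain_flip: "Complete_Partial_Order.chain (\<lambda>x y. le y x) C \<longleftrightarrow> Complete_Partial_Order.chain le C"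
  by (auto simp: Complete_Partial_Order.chain_def)

lemma wf_of_chains:
  assumes rf: "\<And>a. a\<in>A \<Longrightarrow> le a a"
    and tr: "\<And>a b c. a\<in>A \<Longrightarrow> b\<in>A \<Longrightarrow> c\<in>A \<Longrightarrow> le a b \<Longrightarrow> le b c \<Longrightarrow> le a c"
    and an: "\<And>a b. a\<in>A \<Longrightarrow> b\<in>A \<Longrightarrow> le a b \<Longrightarrow> le b a \<Longrightarrow> a = b"
    and fin: "\<forall>C. C \<subseteq> A \<and> Complete_Partial_Order.chain le C \<longrightarrow> finite C"
  shows "wf {(a,b). a\<in>A \<and> b\<in>A \<and> le a b \<and> a\<noteq>b}"
proof (rule ccontr)
  assume "\<not> ?thesis"
  then obtain f where f: "\<And>i. (f (Suc i), f i) \<in> {(a,b). a\<in>A \<and> b\<in>A \<and> le a b \<and> a\<noteq>b}"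
    unfolding wf_iff_no_infinite_down_chain by blast
  have inA: "f i \<in> A" for i using f[of i] by auto
  have mono: "le (f (i + k)) (f i)" if "k > 0" for i k
    using that
  proof (induction k)
    case 0 then show ?case by simp
  next
    case (Suc k)
    show ?case
    proof (cases "k = 0")
      case True then show ?thesis using f[of i] by simp
    next
      case False
      then have "le (f (i + k)) (f i)" using Suc by simp
      moreover have "le (f (Suc (i + k))) (f (i+k))" using f[of "i+k"] by simp
      ultimately show ?thesis using tr[OF inA inA inA] by (simp)
    qed
  qed
  have strict: "f j \<noteq> f i" if "i < j" for i j
  proof
    assume eq: "f j = f i"
    have a: "le (f (Suc i)) (f i)" "f (Suc i) \<noteq> f i" using f[of i] by auto
    show False
    proof (cases "j = Suc i")
      case True then show False using a eq by simp
    next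
      case False
      then have "Suc i + (j - Suc i) = j" "j - Suc i > 0" using that by auto
      then have "le (f j) (f (Suc i))" using mono[of "j - Suc i" "Suc i"] by simp
      then have "le (f i) (f (Suc i))" using eq by simp
      then show False using an[OF inA inA] a by simp
    qed
  qed
  have "inj f"
  proof (rule injI)
    fix i j assume eq: "f i = f j"
    show "i = j"
    proof (rule ccontr)
      assume "i \<noteq> j"
      then have "i < j \<or> j < i" by arith
      then show False using strict[of i j] strict[of j i] eq by force
    qed
  qed
  then have inf: "\<not> finite (range f)" using infinite_iff_countable_subset by blast
  have "Complete_Partial_Order.chain le (range f)"
  proof (rule chainI)
    fix x y assume "x \<in> range f" "y \<in> range f"
    then obtain i j where "x = f i" "y = f j" by auto
    moreover have "le (f i) (f j) \<or> le (f j) (f i)"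
    proof (cases i j rule: linorder_cases)
      case less
      then obtain k where "j = i + k" "k > 0" by (metis less_imp_add_positive)
      then show ?thesis using mono by auto
    next
      case equal
      then show ?thesis using rf inA by auto
    next
      case greater
      then obtain k where "i = j + k" "k > 0" by (metis less_imp_add_positive)
      then show ?thesis using mono by auto
    qed
    ultimately show "le x y \<or> le y x" by simp
  qed
  moreover have "range f \<subseteq> A" using inA by auto
  ultimately show False using fin inf by blast
qed

locale clat =
  fixes A :: "'a set" and le :: "'a \<Rightarrow> 'a \<Rightarrow> bool"
  assumes lat: "is_lattice A le"
begin

lemma refl: "a \<in> A \<Longrightarrow> le a a"
  using lat unfolding is_lattice_def by blast

lemma antisym: "a \<in> A \<Longrightarrow> b \<in> A \<Longrightarrow> le a b \<Longrightarrow> le b a \<Longrightarrow> a = b"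
  using lat unfolding is_lattice_def by blast

lemma trans: "a \<in> A \<Longrightarrow> b \<in> A \<Longrightarrow> c \<in> A \<Longrightarrow> le a b \<Longrightarrow> le b c \<Longrightarrow> le a c"
  using lat unfolding is_lattice_def by blast

lemma join: assumes "a \<in> A" "b \<in> A" shows "is_join A le a b (ljoin A le a b)"
proof -
  obtain c where c: "is_join A le a b c" using lat assms unfolding is_lattice_def by blast
  have "\<And>c'. is_join A le a b c' \<Longrightarrow> c' = c"
    using c antisym unfolding is_join_def by blast
  then have "(THE c. is_join A le a b c) = c" using c by blast
  then show ?thesis using c unfolding ljoin_def by simp
qed

lemma meet: assumes "a \<in> A" "b \<in> A" shows "is_meet A le a b (lmeet A le a b)"
proof -
  obtain c where c: "is_meet A le a b c" using lat assms unfolding is_lattice_def by blast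
  have "\<And>c'. is_meet A le a b c' \<Longrightarrow> c' = c"
    using c antisym unfolding is_meet_def by blast
  then have "(THE c. is_meet A le a b c) = c" using c by blast
  then show ?thesis using c unfolding lmeet_def by simp
qed

lemma join_in: "a \<in> A \<Longrightarrow> b \<in> A \<Longrightarrow> ljoin A le a b \<in> A"
  using join unfolding is_join_def by blast
lemma join_ub1: "a \<in> A \<Longrightarrow> b \<in> A \<Longrightarrow> le a (ljoin A le a b)"
  using join unfolding is_join_def by blast
lemma join_ub2: "a \<in> A \<Longrightarrow> b \<in> A \<Longrightarrow> le b (ljoin A le a b)"
  using join unfolding is_join_def by blast
lemma join_least: "a \<in> A \<Longrightarrow> b \<in> A \<Longrightarrow> d \<in> A \<Longrightarrow> le a d \<Longrightarrow> le b d \<Longrightarrow> le (ljoin A le a b) d"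
  using join unfolding is_join_def by blast
lemma join_le_iff: "a \<in> A \<Longrightarrow> b \<in> A \<Longrightarrow> d \<in> A \<Longrightarrow> le (ljoin A le a b) d \<longleftrightarrow> le a d \<and> le b d"
proof
  assume a: "a \<in> A" "b \<in> A" "d \<in> A" "le (ljoin A le a b) d"
  show "le a d \<and> le b d"
    using trans[OF a(1) join_in[OF a(1,2)] a(3) join_ub1[OF a(1,2)] a(4)]
          trans[OF a(2) join_in[OF a(1,2)] a(3) join_ub2[OF a(1,2)] a(4)] by simp
next
  assume "a \<in> A" "b \<in> A" "d \<in> A" "le a d \<and> le b d"
  then show "le (ljoin A le a b) d" using join_least by simp
qed

lemma meet_in: "a \<in> A \<Longrightarrow> b \<in> A \<Longrightarrow> lmeet A le a b \<in> A"
  using meet unfolding is_meet_def by blast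
lemma meet_lb1: "a \<in> A \<Longrightarrow> b \<in> A \<Longrightarrow> le (lmeet A le a b) a"
  using meet unfolding is_meet_def by blast
lemma meet_lb2: "a \<in> A \<Longrightarrow> b \<in> A \<Longrightarrow> le (lmeet A le a b) b"
  using meet unfolding is_meet_def by blast
lemma meet_greatest: "a \<in> A \<Longrightarrow> b \<in> A \<Longrightarrow> d \<in> A \<Longrightarrow> le d a \<Longrightarrow> le d b \<Longrightarrow> le d (lmeet A le a b)"
  using meet unfolding is_meet_def by blast

lemma eq_by_ub: "c \<in> A \<Longrightarrow> c' \<in> A \<Longrightarrow> (\<And>d. d \<in> A \<Longrightarrow> le c d \<longleftrightarrow> le c' d) \<Longrightarrow> c = c'"
proof -
  assume a: "c \<in> A" "c' \<in> A" "\<And>d. d \<in> A \<Longrightarrow> le c d \<longleftrightarrow> le c' d"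
  have "le c c'" using a(3)[OF a(2)] refl[OF a(2)] by simp
  moreover have "le c' c" using a(3)[OF a(1)] refl[OF a(1)] by simp
  ultimately show ?thesis using antisym a by simp
qed

lemma join_eq_right: "a \<in> A \<Longrightarrow> b \<in> A \<Longrightarrow> le a b \<Longrightarrow> ljoin A le a b = b"
proof -
  assume a: "a \<in> A" "b \<in> A" "le a b"
  show ?thesis by (rule antisym[OF join_in[OF a(1,2)] a(2) join_least[OF a(1,2,2) a(3) refl[OF a(2)]] join_ub2[OF a(1,2)]])
qed

lemma join_eq_left: "a \<in> A \<Longrightarrow> b \<in> A \<Longrightarrow> le b a \<Longrightarrow> ljoin A le a b = a"
proof -
  assume a: "a \<in> A" "b \<in> A" "le b a"
  show ?thesis by (rule antisym[OF join_in[OF a(1,2)] a(1) join_least[OF a(1,2,1) refl[OF a(1)] a(3)] join_ub1[OF a(1,2)]])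
qed

lemma le_iff_join: "a \<in> A \<Longrightarrow> b \<in> A \<Longrightarrow> le a b \<longleftrightarrow> ljoin A le a b = b"
proof
  assume "a \<in> A" "b \<in> A" "le a b" then show "ljoin A le a b = b" by (rule join_eq_right)
next
  assume "a \<in> A" "b \<in> A" "ljoin A le a b = b" then show "le a b" using join_ub1[of a b] by simp
qed

lemma join_unique: "a \<in> A \<Longrightarrow> b \<in> A \<Longrightarrow> is_join A le a b c \<Longrightarrow> ljoin A le a b = c"
proof -
  assume a: "a \<in> A" "b \<in> A" and c: "is_join A le a b c"
  have c1: "c \<in> A" "le a c" "le b c" "\<And>d. d \<in> A \<Longrightarrow> le a d \<Longrightarrow> le b d \<Longrightarrow> le c d"
    using c unfolding is_join_def by auto
  show ?thesis
    by (rule antisym[OF join_in[OF a] c1(1) join_least[OF a c1(1-3)] c1(4)[OF join_in[OF a] join_ub1[OF a] join_ub2[OF a]]])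
qed

lemma meet_unique: "a \<in> A \<Longrightarrow> b \<in> A \<Longrightarrow> is_meet A le a b c \<Longrightarrow> lmeet A le a b = c"
proof -
  assume a: "a \<in> A" "b \<in> A" and c: "is_meet A le a b c"
  have c1: "c \<in> A" "le c a" "le c b" "\<And>d. d \<in> A \<Longrightarrow> le d a \<Longrightarrow> le d b \<Longrightarrow> le d c"
    using c unfolding is_meet_def by auto
  show ?thesis
    by (rule antisym[OF meet_in[OF a] c1(1) c1(4)[OF meet_in[OF a] meet_lb1[OF a] meet_lb2[OF a]] meet_greatest[OF a c1(1-3)]])
qed

end

lemma fl_lat: "fin_length_lattice A le \<Longrightarrow> is_lattice A le"
  unfolding fin_length_lattice_def by (erule conjunct1)
lemma fl_ne: "fin_length_lattice A le \<Longrightarrow> A \<noteq> {}"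
  unfolding fin_length_lattice_def by (erule conjunct1[OF conjunct2])
lemma fl_chain: "fin_length_lattice A le \<Longrightarrow> \<forall>C. C \<subseteq> A \<and> Complete_Partial_Order.chain le C \<longrightarrow> finite C"
  unfolding fin_length_lattice_def by (erule conjunct2[OF conjunct2])

lemma fin_length_clat: "fin_length_lattice A le \<Longrightarrow> clat A le"
  unfolding clat_def by (rule fl_lat)

lemma fin_length_bot:
  assumes fl: "fin_length_lattice A le"
  shows "lbot A le \<in> A \<and> (\<forall>b\<in>A. le (lbot A le) b)"
proof -
  interpret clat A le using fin_length_clat[OF fl] .
  have wf: "wf {(a,b). a\<in>A \<and> b\<in>A \<and> le a b \<and> a\<noteq>b}"
  proof (rule wf_of_chains[of A le])
    show "\<forall>C. C \<subseteq> A \<and> Complete_Partial_Order.chain le C \<longrightarrow> finite C"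
      using fl_chain[OF fl] by simp
  next
    show "\<And>a. a \<in> A \<Longrightarrow> le a a" by (rule refl)
  next
    show "\<And>a b c. a \<in> A \<Longrightarrow> b \<in> A \<Longrightarrow> c \<in> A \<Longrightarrow> le a b \<Longrightarrow> le b c \<Longrightarrow> le a c" by (rule trans)
  next
    show "\<And>a b. a \<in> A \<Longrightarrow> b \<in> A \<Longrightarrow> le a b \<Longrightarrow> le b a \<Longrightarrow> a = b" by (rule antisym)
  qed
  obtain a0 where a0: "a0 \<in> A" using fl_ne[OF fl] by blast
  obtain m where m: "m \<in> A" "\<And>b. (b, m) \<in> {(a,b). a\<in>A \<and> b\<in>A \<and> le a b \<and> a\<noteq>b} \<Longrightarrow> b \<notin> A"
  proof (rule wfE_min[OF wf a0])
    fix z assume "z \<in> A" "\<And>y. (y, z) \<in> {(a,b). a\<in>A \<and> b\<in>A \<and> le a b \<and> a\<noteq>b} \<Longrightarrow> y \<notin> A"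
    then show thesis by (rule that)
  qed
  have mb: "le m b" if "b \<in> A" for b
  proof -
    have "lmeet A le m b \<in> A" "le (lmeet A le m b) m" using meet_in[OF m(1) that] meet_lb1[OF m(1) that] by auto
    note h = this
    have "lmeet A le m b = m"
    proof (rule ccontr)
      assume "lmeet A le m b \<noteq> m"
      then have "(lmeet A le m b, m) \<in> {(a,b). a\<in>A \<and> b\<in>A \<and> le a b \<and> a\<noteq>b}"
        using h m(1) by simp
      then show False using m(2) h(1) by blast
    qed
    then show ?thesis using meet_lb2[OF m(1) that] by simp
  qed
  have "(THE a. a \<in> A \<and> (\<forall>b\<in>A. le a b)) = m"
  proof (rule the_equality)
    fix a assume "a \<in> A \<and> (\<forall>b\<in>A. le a b)"
    then show "a = m" using antisym[of a m] mb m(1) by blast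
  qed (use m(1) mb in blast)
  then show ?thesis using m(1) mb unfolding lbot_def by simp
qed

lemma is_join_flip: "is_join A (\<lambda>x y. le y x) a b c = is_meet A le a b c"
  unfolding is_join_def is_meet_def by simp
lemma is_meet_flip: "is_meet A (\<lambda>x y. le y x) a b c = is_join A le a b c"
  unfolding is_join_def is_meet_def by simp
lemma ljoin_flip: "ljoin A (\<lambda>x y. le y x) a b = lmeet A le a b"
  unfolding ljoin_def lmeet_def is_join_flip[of A le] by (rule refl)
lemma lmeet_flip: "lmeet A (\<lambda>x y. le y x) a b = ljoin A le a b"
  unfolding ljoin_def lmeet_def is_meet_flip[of A le] by (rule refl)
lemma ltop_flip: "ltop A (\<lambda>x y. le y x) = lbot A le"
  unfolding ltop_def lbot_def by (rule refl)
lemma lbot_flip: "lbot A (\<lambda>x y. le y x) = ltop A le"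
  unfolding ltop_def lbot_def by (rule refl)

lemma is_lattice_flip:
  assumes "is_lattice A le" shows "is_lattice A (\<lambda>x y. le y x)"
proof -
  interpret clat A le using assms unfolding clat_def .
  show ?thesis unfolding is_lattice_def is_join_flip[of A le] is_meet_flip[of A le]
  proof (intro conjI ballI impI)
    fix a assume "a \<in> A" then show "le a a" by (rule refl)
  next
    fix a b assume h: "a \<in> A" "b \<in> A" "le b a \<and> le a b" then show "a = b" using antisym[OF h(1,2)] by blast
  next
    fix a b c assume h: "a \<in> A" "b \<in> A" "c \<in> A" "le b a \<and> le c b" then show "le c a" using trans[OF h(3,2,1)] by blast
  next
    fix a b assume "a \<in> A" "b \<in> A" then show "\<exists>c. is_meet A le a b c" using meet by blast
  next
    fix a b assume "a \<in> A" "b \<in> A" then show "\<exists>c. is_join A le a b c" using join by blast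
  qed
qed

lemma fl_flip:
  assumes "fin_length_lattice A le" shows "fin_length_lattice A (\<lambda>x y. le y x)"
  unfolding fin_length_lattice_def chain_flip[of le]
  using is_lattice_flip[OF fl_lat[OF assms]] fl_ne[OF assms] fl_chain[OF assms] by simp

lemma fin_length_top:
  assumes fl: "fin_length_lattice A le"
  shows "ltop A le \<in> A \<and> (\<forall>b\<in>A. le b (ltop A le))"
  using fin_length_bot[OF fl_flip[OF fl]] unfolding lbot_flip[of A le] by simp


lemma S_wf_less:
  assumes "fin_length_type TYPE('i::order)"
  shows "wf {(a::'i, b). a < b}"
proof -
  have "wf {(a::'i,b). a \<in> UNIV \<and> b \<in> UNIV \<and> a \<le> b \<and> a \<noteq> b}"
  proof (rule wf_of_chains)
    show "\<forall>C. C \<subseteq> (UNIV::'i set) \<and> Complete_Partial_Order.chain (\<le>) C \<longrightarrow> finite C"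
      using assms unfolding fin_length_type_def by simp
  next
    show "\<And>a::'i. a \<in> UNIV \<Longrightarrow> a \<le> a" by simp
  next
    show "\<And>a b c::'i. a \<in> UNIV \<Longrightarrow> b \<in> UNIV \<Longrightarrow> c \<in> UNIV \<Longrightarrow> a \<le> b \<Longrightarrow> b \<le> c \<Longrightarrow> a \<le> c"
      by (rule order_trans)
  next
    show "\<And>a b::'i. a \<in> UNIV \<Longrightarrow> b \<in> UNIV \<Longrightarrow> a \<le> b \<Longrightarrow> b \<le> a \<Longrightarrow> a = b"
      by (rule order_antisym)
  qed
  moreover have "{(a::'i,b). a \<in> UNIV \<and> b \<in> UNIV \<and> a \<le> b \<and> a \<noteq> b} = {(a,b). a < b}"
    by (auto simp: less_le)
  ultimately show ?thesis by simp
qed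

lemma S_wf_greater:
  assumes "fin_length_type TYPE('i::order)"
  shows "wf {(b, a::'i). a < b}"
proof -
  have "wf {(a::'i,b). a \<in> UNIV \<and> b \<in> UNIV \<and> (\<lambda>x y. y \<le> x) a b \<and> a \<noteq> b}"
  proof (rule wf_of_chains)
    show "\<forall>C. C \<subseteq> (UNIV::'i set) \<and> Complete_Partial_Order.chain (\<lambda>x y. y \<le> x) C \<longrightarrow> finite C"
      using assms unfolding fin_length_type_def chain_flip[of "(\<le>)"] by simp
  next
    show "\<And>a::'i. a \<in> UNIV \<Longrightarrow> a \<le> a" by simp
  next
    show "\<And>a b c::'i. a \<in> UNIV \<Longrightarrow> b \<in> UNIV \<Longrightarrow> c \<in> UNIV \<Longrightarrow> b \<le> a \<Longrightarrow> c \<le> b \<Longrightarrow> c \<le> a"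
      by (rule order_trans)
  next
    show "\<And>a b::'i. a \<in> UNIV \<Longrightarrow> b \<in> UNIV \<Longrightarrow> b \<le> a \<Longrightarrow> a \<le> b \<Longrightarrow> a = b"
      by (rule order_antisym)
  qed
  moreover have "{(a::'i,b). a \<in> UNIV \<and> b \<in> UNIV \<and> (\<lambda>x y. y \<le> x) a b \<and> a \<noteq> b} = {(b,a). a < b}"
    by (auto simp: less_le)
  ultimately show ?thesis by simp
qed

lemma cover_exists:
  assumes fin: "fin_length_type TYPE('i::order)" and xw: "(x::'i) < w"
  shows "\<exists>y. x \<prec> y \<and> y \<le> w"
proof -
  obtain y where y: "y \<in> {y. x < y \<and> y \<le> w}"
    and m: "\<And>z. (z, y) \<in> {(a, b). a < b} \<Longrightarrow> z \<notin> {y. x < y \<and> y \<le> w}"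
  proof (rule wfE_min[OF S_wf_less[OF fin], of w "{y. x < y \<and> y \<le> w}"])
    show "w \<in> {y. x < y \<and> y \<le> w}" using xw by simp
  next
    fix z assume "z \<in> {y. x < y \<and> y \<le> w}" "\<And>y. (y, z) \<in> {(a, b). a < b} \<Longrightarrow> y \<notin> {y. x < y \<and> y \<le> w}"
    then show thesis by (rule that)
  qed
  have "x \<prec> y" unfolding covers_def
  proof (intro conjI notI)
    show "x < y" using y by simp
    assume "\<exists>z. x < z \<and> z < y"
    then obtain z where z: "x < z" "z < y" by blast
    then have "z \<le> w" using y order_trans[OF less_imp_le[OF z(2)]] by simp
    then show False using m[of z] z by simp
  qed
  then show ?thesis using y by blast
qed

lemma lower_cover_exists:
  assumes fin: "fin_length_type TYPE('i::order)" and xw: "(x::'i) < c"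
  shows "\<exists>c'. x \<le> c' \<and> c' \<prec> c"
proof -
  obtain y where y: "y \<in> {y. x \<le> y \<and> y < c}"
    and m: "\<And>z. (z, y) \<in> {(b, a). a < b} \<Longrightarrow> z \<notin> {y. x \<le> y \<and> y < c}"
  proof (rule wfE_min[OF S_wf_greater[OF fin], of x "{y. x \<le> y \<and> y < c}"])
    show "x \<in> {y. x \<le> y \<and> y < c}" using xw by simp
  next
    fix z assume "z \<in> {y. x \<le> y \<and> y < c}" "\<And>y. (y, z) \<in> {(b, a). a < b} \<Longrightarrow> y \<notin> {y. x \<le> y \<and> y < c}"
    then show thesis by (rule that)
  qed
  have "y \<prec> c" unfolding covers_def
  proof (intro conjI notI)
    show "y < c" using y by simp
    assume "\<exists>z. y < z \<and> z < c"
    then obtain z where z: "y < z" "z < c" by blast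
    then have "x \<le> z" using y order_trans[OF _ less_imp_le[OF z(1)]] by simp
    then show False using m[of z] z by simp
  qed
  then show ?thesis using y by blast
qed

locale gsys =
  fixes L :: "'i::lattice \<Rightarrow> 'a set" and le :: "'i \<Rightarrow> 'a \<Rightarrow> 'a \<Rightarrow> bool"
  assumes S_fin: "fin_length_type TYPE('i)" and sys: "glued_system L le"
begin

abbreviation J where "J x \<equiv> ljoin (L x) (le x)"
abbreviation bt where "bt x \<equiv> lbot (L x) (le x)"
abbreviation tp where "tp x \<equiv> ltop (L x) (le x)"

lemma sys1: "\<forall>x. fin_length_lattice (L x) (le x)"
  using sys unfolding glued_system_def by (rule conjunct1)
lemma sys2: "\<forall>x y. x \<le> y \<and> L x \<inter> L y \<noteq> {} \<longrightarrow>
        is_filter (L x) (le x) (L x \<inter> L y) \<and> is_ideal (L y) (le y) (L x \<inter> L y)"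
  using sys unfolding glued_system_def by (rule conjunct1[OF conjunct2])
lemma sys3: "\<forall>x y. x \<le> y \<and> L x \<inter> L y \<noteq> {} \<longrightarrow>
        (\<forall>a\<in>L x \<inter> L y. \<forall>b\<in>L x \<inter> L y. le x a b \<longleftrightarrow> le y a b)"
  using sys unfolding glued_system_def by (rule conjunct1[OF conjunct2[OF conjunct2]])
lemma sys4: "\<forall>x y. x \<prec> y \<longrightarrow> L x \<inter> L y \<noteq> {}"
  using sys unfolding glued_system_def by (rule conjunct1[OF conjunct2[OF conjunct2[OF conjunct2]]])
lemma sys5: "\<forall>x y. L x \<inter> L y \<subseteq> L (inf x y) \<inter> L (sup x y)"
  using sys unfolding glued_system_def by (rule conjunct2[OF conjunct2[OF conjunct2[OF conjunct2]]])

lemma fl: "fin_length_lattice (L x) (le x)" using sys1 by (rule spec)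
lemma lx: "clat (L x) (le x)" by (rule fin_length_clat[OF fl])

lemma bt_in: "bt x \<in> L x" using fin_length_bot[OF fl] by (rule conjunct1)
lemma bt_le: "a \<in> L x \<Longrightarrow> le x (bt x) a" using fin_length_bot[OF fl, of x] by blast
lemma tp_in: "tp x \<in> L x" using fin_length_top[OF fl] by (rule conjunct1)
lemma le_tp: "a \<in> L x \<Longrightarrow> le x a (tp x)" using fin_length_top[OF fl, of x] by blast

lemma lrefl: "a \<in> L x \<Longrightarrow> le x a a" by (rule clat.refl[OF lx])
lemma ltrans: "a \<in> L x \<Longrightarrow> b \<in> L x \<Longrightarrow> c \<in> L x \<Longrightarrow> le x a b \<Longrightarrow> le x b c \<Longrightarrow> le x a c"
  by (rule clat.trans[OF lx])
lemma lantisym: "a \<in> L x \<Longrightarrow> b \<in> L x \<Longrightarrow> le x a b \<Longrightarrow> le x b a \<Longrightarrow> a = b"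
  by (rule clat.antisym[OF lx])
lemma J_in: "a \<in> L x \<Longrightarrow> b \<in> L x \<Longrightarrow> J x a b \<in> L x" by (rule clat.join_in[OF lx])
lemma J_ub1: "a \<in> L x \<Longrightarrow> b \<in> L x \<Longrightarrow> le x a (J x a b)" by (rule clat.join_ub1[OF lx])
lemma J_ub2: "a \<in> L x \<Longrightarrow> b \<in> L x \<Longrightarrow> le x b (J x a b)" by (rule clat.join_ub2[OF lx])
lemma J_least: "a \<in> L x \<Longrightarrow> b \<in> L x \<Longrightarrow> d \<in> L x \<Longrightarrow> le x a d \<Longrightarrow> le x b d \<Longrightarrow> le x (J x a b) d"
  by (rule clat.join_least[OF lx])
lemma J_le_iff: "a \<in> L x \<Longrightarrow> b \<in> L x \<Longrightarrow> d \<in> L x \<Longrightarrow> le x (J x a b) d \<longleftrightarrow> le x a d \<and> le x b d"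
  by (rule clat.join_le_iff[OF lx])
lemma J_eq_right: "a \<in> L x \<Longrightarrow> b \<in> L x \<Longrightarrow> le x a b \<Longrightarrow> J x a b = b"
  by (rule clat.join_eq_right[OF lx])
lemma J_eq_left: "a \<in> L x \<Longrightarrow> b \<in> L x \<Longrightarrow> le x b a \<Longrightarrow> J x a b = a"
  by (rule clat.join_eq_left[OF lx])
lemma J_unique: "a \<in> L x \<Longrightarrow> b \<in> L x \<Longrightarrow> is_join (L x) (le x) a b c \<Longrightarrow> J x a b = c"
  by (rule clat.join_unique[OF lx])
lemma eq_by_ub: "c \<in> L x \<Longrightarrow> c' \<in> L x \<Longrightarrow> (\<And>d. d \<in> L x \<Longrightarrow> le x c d \<longleftrightarrow> le x c' d) \<Longrightarrow> c = c'"
  by (rule clat.eq_by_ub[OF lx])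

lemma cap_inf: "a \<in> L x \<Longrightarrow> a \<in> L y \<Longrightarrow> a \<in> L (inf x y)"
  using sys5 by blast
lemma cap_sup: "a \<in> L x \<Longrightarrow> a \<in> L y \<Longrightarrow> a \<in> L (sup x y)"
  using sys5 by blast
lemma cover_ne: "x \<prec> y \<Longrightarrow> \<exists>c. c \<in> L x \<and> c \<in> L y"
  using sys4 by blast

lemma ov_agree: "x \<le> y \<Longrightarrow> a \<in> L x \<Longrightarrow> a \<in> L y \<Longrightarrow> b \<in> L x \<Longrightarrow> b \<in> L y \<Longrightarrow> le x a b \<longleftrightarrow> le y a b"
  using sys3 by blast

lemma ov_filter: "x \<le> y \<Longrightarrow> c \<in> L x \<Longrightarrow> c \<in> L y \<Longrightarrow> is_filter (L x) (le x) (L x \<inter> L y)"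
  using sys2 by blast
lemma ov_ideal: "x \<le> y \<Longrightarrow> c \<in> L x \<Longrightarrow> c \<in> L y \<Longrightarrow> is_ideal (L y) (le y) (L x \<inter> L y)"
  using sys2 by blast

lemma up_closed: "x \<le> y \<Longrightarrow> a \<in> L x \<Longrightarrow> a \<in> L y \<Longrightarrow> b \<in> L x \<Longrightarrow> le x a b \<Longrightarrow> b \<in> L y"
proof -
  assume a: "x \<le> y" "a \<in> L x" "a \<in> L y" "b \<in> L x" "le x a b"
  have "\<forall>a\<in>L x \<inter> L y. \<forall>b\<in>L x. le x a b \<longrightarrow> b \<in> L x \<inter> L y"
    using ov_filter[OF a(1-3)] unfolding is_filter_def by (elim conjE)
  then show "b \<in> L y" using a by blast
qed

lemma down_closed: "x \<le> y \<Longrightarrow> a \<in> L x \<Longrightarrow> a \<in> L y \<Longrightarrow> b \<in> L y \<Longrightarrow> le y b a \<Longrightarrow> b \<in> L x"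
proof -
  assume a: "x \<le> y" "a \<in> L x" "a \<in> L y" "b \<in> L y" "le y b a"
  have "\<forall>a\<in>L x \<inter> L y. \<forall>b\<in>L y. le y b a \<longrightarrow> b \<in> L x \<inter> L y"
    using ov_ideal[OF a(1-3)] unfolding is_ideal_def by (elim conjE)
  then show "b \<in> L x" using a by blast
qed

lemma ov_join_closed: "x \<le> y \<Longrightarrow> a \<in> L x \<Longrightarrow> a \<in> L y \<Longrightarrow> b \<in> L x \<Longrightarrow> b \<in> L y \<Longrightarrow> J y a b \<in> L x"
proof -
  assume a: "x \<le> y" "a \<in> L x" "a \<in> L y" "b \<in> L x" "b \<in> L y"
  have "\<forall>a\<in>L x \<inter> L y. \<forall>b\<in>L x \<inter> L y. J y a b \<in> L x \<inter> L y"
    using ov_ideal[OF a(1-3)] unfolding is_ideal_def by (elim conjE)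
  then show ?thesis using a by blast
qed

lemma ov_join: "x \<le> y \<Longrightarrow> a \<in> L x \<Longrightarrow> a \<in> L y \<Longrightarrow> b \<in> L x \<Longrightarrow> b \<in> L y \<Longrightarrow> J x a b = J y a b"
proof -
  assume a: "x \<le> y" "a \<in> L x" "a \<in> L y" "b \<in> L x" "b \<in> L y"
  let ?c = "J y a b"
  have cy: "?c \<in> L y" using J_in a by simp
  have cx: "?c \<in> L x" using ov_join_closed[OF a] .
  have "is_join (L x) (le x) a b ?c"
    unfolding is_join_def
  proof (intro conjI ballI impI)
    show "?c \<in> L x" by (rule cx)
    show "le x a ?c" using J_ub1[OF a(3,5)] ov_agree[OF a(1,2,3) cx cy] by simp
    show "le x b ?c" using J_ub2[OF a(3,5)] ov_agree[OF a(1,4,5) cx cy] by simp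
    fix d assume d: "d \<in> L x" "le x a d \<and> le x b d"
    have dy: "d \<in> L y" using up_closed[OF a(1-3) d(1)] d(2) by simp
    have "le y a d" "le y b d" using d(2) ov_agree[OF a(1,2,3) d(1) dy] ov_agree[OF a(1,4,5) d(1) dy] by auto
    then have "le y ?c d" using J_least[OF a(3,5) dy] by simp
    then show "le x ?c d" using ov_agree[OF a(1) cx cy d(1) dy] by simp
  qed
  then show ?thesis using J_unique[OF a(2,4)] by simp
qed

lemma bt_ov: "x \<le> y \<Longrightarrow> c \<in> L x \<Longrightarrow> c \<in> L y \<Longrightarrow> bt y \<in> L x"
  using down_closed bt_in bt_le by blast

lemma tp_ov: "x \<le> y \<Longrightarrow> c \<in> L x \<Longrightarrow> c \<in> L y \<Longrightarrow> tp x \<in> L y"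
  using up_closed tp_in le_tp by blast

lemma ov_char: "x \<le> y \<Longrightarrow> c \<in> L x \<Longrightarrow> c \<in> L y \<Longrightarrow> a \<in> L x \<Longrightarrow> a \<in> L y \<longleftrightarrow> le x (bt y) a"
proof
  assume a: "x \<le> y" "c \<in> L x" "c \<in> L y" "a \<in> L x" "a \<in> L y"
  have "bt y \<in> L x" using bt_ov a by blast
  then show "le x (bt y) a" using ov_agree[OF a(1) _ bt_in a(4,5)] bt_le[OF a(5)] by blast
next
  assume a: "x \<le> y" "c \<in> L x" "c \<in> L y" "a \<in> L x" "le x (bt y) a"
  have "bt y \<in> L x" using bt_ov a by blast
  then show "a \<in> L y" using up_closed[OF a(1) _ bt_in a(4,5)] by blast
qed

lemma convex3:
  assumes "x \<le> y" "y \<le> z" "a \<in> L x" "a \<in> L z" "c \<in> L y" "c \<in> L z" "d \<in> L x" "d \<in> L y"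
  shows "a \<in> L y"
proof -
  have xz: "x \<le> z" using assms(1,2) by (rule order_trans)
  have b1: "bt z \<in> L y" using bt_ov[OF assms(2,5,6)] .
  have b2: "bt z \<in> L x" using bt_ov[OF xz assms(3,4)] .
  have "le x (bt z) a" using ov_agree[OF xz b2 bt_in assms(3,4)] bt_le[OF assms(4)] by simp
  then show ?thesis using up_closed[OF assms(1) b2 b1 assms(3)] by simp
qed

lemma convex:
  shows "x \<le> y \<Longrightarrow> y \<le> z \<Longrightarrow> a \<in> L x \<Longrightarrow> a \<in> L z \<Longrightarrow> a \<in> L y"
proof (induction x arbitrary: y rule: wf_induct_rule[OF S_wf_greater[OF S_fin]])
  case (1 x)
  show ?case
  proof (cases "x = y")
    case True then show ?thesis using 1 by simp
  next
    case False
    then have "x < y" using 1 by simp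
    then obtain y' where y': "x \<prec> y'" "y' \<le> y" using cover_exists[OF S_fin] by blast
    have xy': "x < y'" using y' unfolding covers_def by simp
    obtain c where c: "c \<in> L x" "c \<in> L y'" using cover_ne[OF y'(1)] by blast
    have t1: "tp x \<in> L y'" using tp_ov[OF less_imp_le[OF xy'] c] .
    have xz: "x \<le> z" using 1 by simp
    have t2: "tp x \<in> L z" using tp_ov[OF xz 1(4,5)] .
    have y'z: "y' \<le> z" using y'(2) 1(3) by simp
    have "a \<in> L y'" using convex3[OF less_imp_le[OF xy'] y'z 1(4,5) t1 t2 c] .
    then show ?thesis using 1(1)[of y' y] xy' y'(2) 1(3,5) by simp
  qed
qed

end

context gsys
begin

lemma cover_le: "x \<prec> y \<Longrightarrow> x \<le> y"
  unfolding covers_def by (simp add: less_imp_le)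
lemma cover_less: "x \<prec> y \<Longrightarrow> x < y"
  unfolding covers_def by simp

lemma J_assoc_le: "a \<in> L x \<Longrightarrow> b \<in> L x \<Longrightarrow> c \<in> L x \<Longrightarrow> le x b c \<Longrightarrow> J x (J x a b) c = J x a c"
proof -
  assume h: "a \<in> L x" "b \<in> L x" "c \<in> L x" "le x b c"
  show ?thesis
  proof (rule eq_by_ub)
    show "J x (J x a b) c \<in> L x" using J_in h by simp
    show "J x a c \<in> L x" using J_in h by simp
    fix d assume d: "d \<in> L x"
    have "le x c d \<Longrightarrow> le x b d" using ltrans[OF h(2,3) d h(4)] .
    then show "le x (J x (J x a b) c) d \<longleftrightarrow> le x (J x a c) d"
      using J_le_iff[OF J_in[OF h(1,2)] h(3) d] J_le_iff[OF h(1,2) d] J_le_iff[OF h(1,3) d] by blast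
  qed
qed

lemma J_distrib: "a \<in> L x \<Longrightarrow> b \<in> L x \<Longrightarrow> c \<in> L x \<Longrightarrow> J x (J x a b) c = J x (J x a c) (J x b c)"
proof -
  assume h: "a \<in> L x" "b \<in> L x" "c \<in> L x"
  show ?thesis
  proof (rule eq_by_ub)
    show "J x (J x a b) c \<in> L x" using J_in h by simp
    show "J x (J x a c) (J x b c) \<in> L x" using J_in h by simp
    fix d assume d: "d \<in> L x"
    show "le x (J x (J x a b) c) d \<longleftrightarrow> le x (J x (J x a c) (J x b c)) d"
      using J_le_iff[OF J_in[OF h(1,2)] h(3) d] J_le_iff[OF h(1,2) d] J_le_iff[OF h(1,3) d]
        J_le_iff[OF h(2,3) d] J_le_iff[OF J_in[OF h(1,3)] J_in[OF h(2,3)] d] by blast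
  qed
qed

definition alpha :: "'a \<Rightarrow> 'i" where
  "alpha a = (THE x. a \<in> L x \<and> (\<forall>y. a \<in> L y \<longrightarrow> x \<le> y))"

lemma alpha_ex:
  assumes "a \<in> L x0" shows "\<exists>x. a \<in> L x \<and> (\<forall>y. a \<in> L y \<longrightarrow> x \<le> y)"
proof -
  obtain m where m: "m \<in> {x. a \<in> L x}" "\<And>y. (y, m) \<in> {(a,b). a < b} \<Longrightarrow> y \<notin> {x. a \<in> L x}"
  proof (rule wfE_min[OF S_wf_less[OF S_fin], of x0 "{x. a \<in> L x}"])
    show "x0 \<in> {x. a \<in> L x}" using assms by simp
  next
    fix z assume "z \<in> {x. a \<in> L x}" "\<And>y. (y, z) \<in> {(a,b). a < b} \<Longrightarrow> y \<notin> {x. a \<in> L x}"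
    then show thesis by (rule that)
  qed
  have "m \<le> y" if "a \<in> L y" for y
  proof -
    have "a \<in> L (inf m y)" using cap_inf m(1) that by simp
    then have "\<not> inf m y < m" using m(2)[of "inf m y"] by auto
    then have "inf m y = m" using inf_le1[of m y] by (simp add: less_le)
    then show ?thesis by (simp add: le_iff_inf)
  qed
  then show ?thesis using m(1) by blast
qed

lemma alpha_mem: "a \<in> L x \<Longrightarrow> a \<in> L (alpha a)"
  and alpha_le: "a \<in> L x \<Longrightarrow> a \<in> L y \<Longrightarrow> alpha a \<le> y"
proof -
  assume a: "a \<in> L x"
  obtain m where m: "a \<in> L m" "\<forall>y. a \<in> L y \<longrightarrow> m \<le> y" using alpha_ex[OF a] by blast
  have "alpha a = m" unfolding alpha_def
  proof (rule the_equality)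
    show "a \<in> L m \<and> (\<forall>y. a \<in> L y \<longrightarrow> m \<le> y)" using m by simp
    fix z assume "a \<in> L z \<and> (\<forall>y. a \<in> L y \<longrightarrow> z \<le> y)"
    then show "z = m" using m by (simp add: order_antisym)
  qed
  then show "a \<in> L (alpha a)" using m by simp
  show "a \<in> L y \<Longrightarrow> alpha a \<le> y" using m \<open>alpha a = m\<close> by simp
qed

inductive LiftR :: "'i \<Rightarrow> 'i \<Rightarrow> 'a \<Rightarrow> 'a \<Rightarrow> bool" where
  LR_refl: "LiftR w w a a"
| LR_step: "x \<prec> y \<Longrightarrow> y \<le> w \<Longrightarrow> LiftR y w (J x a (bt y)) r \<Longrightarrow> LiftR x w a r"

lemma LR_le: "LiftR x w a r \<Longrightarrow> x \<le> w"
proof (induction rule: LiftR.induct)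
  case (LR_step x y w a r) then show ?case using cover_le[of x y] order_trans by blast
qed simp

lemma step_mem:
  assumes "x \<prec> y" "a \<in> L x"
  shows "J x a (bt y) \<in> L x" "J x a (bt y) \<in> L y" "bt y \<in> L x"
proof -
  have xy: "x \<le> y" using cover_le[OF assms(1)] .
  obtain c where c: "c \<in> L x" "c \<in> L y" using cover_ne[OF assms(1)] by blast
  show b: "bt y \<in> L x" using bt_ov[OF xy c] .
  show j: "J x a (bt y) \<in> L x" using J_in[OF assms(2) b] .
  show "J x a (bt y) \<in> L y" using up_closed[OF xy b bt_in j J_ub2[OF assms(2) b]] .
qed

lemma LR_mem: "LiftR x w a r \<Longrightarrow> a \<in> L x \<Longrightarrow> r \<in> L w"
proof (induction rule: LiftR.induct)
  case (LR_refl w a) then show ?case by simp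
next
  case (LR_step x y w a r)
  then show ?case using step_mem by blast
qed

lemma LR_ex: "x \<le> w \<Longrightarrow> a \<in> L x \<Longrightarrow> \<exists>r. LiftR x w a r"
proof (induction x arbitrary: a rule: wf_induct_rule[OF S_wf_greater[OF S_fin]])
  case (1 x)
  show ?case
  proof (cases "x = w")
    case True then show ?thesis using LR_refl by blast
  next
    case False
    then have "x < w" using 1 by simp
    then obtain y where y: "x \<prec> y" "y \<le> w" using cover_exists[OF S_fin] by blast
    have "x < y" using cover_less[OF y(1)] .
    then obtain r where "LiftR y w (J x a (bt y)) r" using 1(1)[of y "J x a (bt y)"] y(2) step_mem[OF y(1) 1(3)] by blast
    then show ?thesis using LR_step[OF y] by blast
  qed
qed

lemma LR_trans: "LiftR x y a s \<Longrightarrow> LiftR y w s r \<Longrightarrow> LiftR x w a r"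
proof (induction rule: LiftR.induct)
  case (LR_refl w a) then show ?case by simp
next
  case (LR_step x x1 y a s)
  have "x1 \<le> w" using LR_step.hyps(2) LR_le[OF LR_step.prems(1)] by (rule order_trans)
  then show ?case using LR_step.IH[OF LR_step.prems(1)] LiftR.LR_step[OF LR_step.hyps(1)] by blast
qed

lemma LR_direct: "LiftR x w a r \<Longrightarrow> a \<in> L x \<Longrightarrow> c \<in> L x \<Longrightarrow> c \<in> L w \<Longrightarrow> r = J x a (bt w)"
proof (induction arbitrary: c rule: LiftR.induct)
  case (LR_refl w a c)
  then show ?case using J_eq_left[OF _ bt_in bt_le] by simp
next
  case (LR_step x y w a r c)
  have xy: "x \<le> y" using cover_le[OF LR_step.hyps(1)] .
  have xw: "x \<le> w" using xy LR_step.hyps(2) by (rule order_trans)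
  have bw: "bt w \<in> L x" using bt_ov[OF xw LR_step.prems(2,3)] .
  have bwy: "bt w \<in> L y" using convex[OF xy LR_step.hyps(2) bw bt_in] .
  note sm = step_mem[OF LR_step.hyps(1) LR_step.prems(1)]
  have r: "r = J y (J x a (bt y)) (bt w)" using LR_step.IH[OF sm(2) bwy bt_in] .
  have "J y (J x a (bt y)) (bt w) = J x (J x a (bt y)) (bt w)"
    using ov_join[OF xy sm(1,2) bw bwy] by simp
  moreover have "le x (bt y) (bt w)"
    using ov_agree[OF xy sm(3) bt_in bw bwy] bt_le[OF bwy] by simp
  then have "J x (J x a (bt y)) (bt w) = J x a (bt w)"
    using J_assoc_le[OF LR_step.prems(1) sm(3) bw] by simp
  ultimately show ?case using r by simp
qed

lemma LR_unique: "LiftR x w a r \<Longrightarrow> LiftR x w a r' \<Longrightarrow> a \<in> L x \<Longrightarrow> r = r'"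
proof (induction x arbitrary: a r r' rule: wf_induct_rule[OF S_wf_greater[OF S_fin]])
  case (1 x)
  show ?case
  proof (cases "x = w")
    case True
    have "r = a" using 1(2)
    proof (cases rule: LiftR.cases)
      case (LR_step y) then show ?thesis using True LR_le[of y w] unfolding covers_def
        by (metis order_less_le_trans less_irrefl)
    qed simp
    moreover have "r' = a" using 1(3)
    proof (cases rule: LiftR.cases)
      case (LR_step y) then show ?thesis using True LR_le[of y w] unfolding covers_def
        by (metis order_less_le_trans less_irrefl)
    qed simp
    ultimately show ?thesis by simp
  next
    case False
    from 1(2) obtain y1 where y1: "x \<prec> y1" "y1 \<le> w" "LiftR y1 w (J x a (bt y1)) r"
      by (cases rule: LiftR.cases) (use False in auto)
    from 1(3) obtain y2 where y2: "x \<prec> y2" "y2 \<le> w" "LiftR y2 w (J x a (bt y2)) r'"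
      by (cases rule: LiftR.cases) (use False in auto)
    have xy1: "x < y1" using cover_less[OF y1(1)] .
    have xy2: "x < y2" using cover_less[OF y2(1)] .
    have IH: "\<And>y a r r'. x < y \<Longrightarrow> LiftR y w a r \<Longrightarrow> LiftR y w a r' \<Longrightarrow> a \<in> L y \<Longrightarrow> r = r'"
      using 1(1) by blast
    note s1 = step_mem[OF y1(1) 1(4)]
    note s2 = step_mem[OF y2(1) 1(4)]
    show ?thesis
    proof (cases "y1 = y2")
      case True
      then show ?thesis using IH[OF xy1 y1(3) _ s1(2)] y2(3) by simp
    next
      case False
      define v where "v = sup y1 y2"
      have y1v: "y1 \<le> v" and y2v: "y2 \<le> v" and vw: "v \<le> w" using y1(2) y2(2) unfolding v_def by auto
      have xv: "x \<le> v" using xy1 y1v by simp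
      define e where "e = J x (J x a (bt y1)) (bt y2)"
      have ex: "e \<in> L x" unfolding e_def using J_in s1(1) s2(3) by simp
      have ey1: "e \<in> L y1" unfolding e_def
        using up_closed[OF less_imp_le[OF xy1] s1(1,2) ex] J_ub1[OF s1(1) s2(3)] unfolding e_def by simp
      have ey2: "e \<in> L y2" unfolding e_def
        using up_closed[OF less_imp_le[OF xy2] s2(3) bt_in ex] J_ub2[OF s1(1) s2(3)] unfolding e_def by simp
      have ev: "e \<in> L v" unfolding v_def using cap_sup[OF ey1 ey2] .
      obtain t1 where t1: "LiftR y1 v (J x a (bt y1)) t1" using LR_ex[OF y1v s1(2)] by blast
      obtain t2 where t2: "LiftR y2 v (J x a (bt y2)) t2" using LR_ex[OF y2v s2(2)] by blast
      have "LiftR x v a t1" using LR_step[OF y1(1) y1v t1] .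
      then have t1e: "t1 = J x a (bt v)" using LR_direct[OF _ 1(4) ex ev] by simp
      have "LiftR x v a t2" using LR_step[OF y2(1) y2v t2] .
      then have t2e: "t2 = J x a (bt v)" using LR_direct[OF _ 1(4) ex ev] by simp
      have t1v: "t1 \<in> L v" using LR_mem[OF t1 s1(2)] .
      obtain t where t: "LiftR v w t1 t" using LR_ex[OF vw t1v] by blast
      have A: "LiftR y1 w (J x a (bt y1)) t" using LR_trans[OF t1 t] .
      have "LiftR y2 v (J x a (bt y2)) t1" using t2 t1e t2e by simp
      then have B: "LiftR y2 w (J x a (bt y2)) t" using LR_trans t by blast
      have "r = t" using IH[OF xy1 y1(3) A s1(2)] .
      moreover have "r' = t" using IH[OF xy2 y2(3) B s2(2)] .
      ultimately show ?thesis by simp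
    qed
  qed
qed

definition Lift :: "'i \<Rightarrow> 'i \<Rightarrow> 'a \<Rightarrow> 'a" where
  "Lift x w a = (THE r. LiftR x w a r)"

lemma Lift_eq: "LiftR x w a r \<Longrightarrow> a \<in> L x \<Longrightarrow> Lift x w a = r"
  unfolding Lift_def using LR_unique by blast

lemma Lift_R: "x \<le> w \<Longrightarrow> a \<in> L x \<Longrightarrow> LiftR x w a (Lift x w a)"
  using LR_ex Lift_eq by metis

lemma Lift_mem: "x \<le> w \<Longrightarrow> a \<in> L x \<Longrightarrow> Lift x w a \<in> L w"
  using Lift_R LR_mem by blast

lemma Lift_refl: "a \<in> L x \<Longrightarrow> Lift x x a = a"
  using Lift_eq[OF LR_refl] .

lemma Lift_comp: "x \<le> y \<Longrightarrow> y \<le> w \<Longrightarrow> a \<in> L x \<Longrightarrow> Lift y w (Lift x y a) = Lift x w a"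
proof -
  assume h: "x \<le> y" "y \<le> w" "a \<in> L x"
  have "LiftR x w a (Lift y w (Lift x y a))"
    using LR_trans[OF Lift_R[OF h(1,3)] Lift_R[OF h(2) Lift_mem[OF h(1,3)]]] .
  then show ?thesis using Lift_eq h(3) by metis
qed

lemma Lift_direct: "x \<le> w \<Longrightarrow> a \<in> L x \<Longrightarrow> c \<in> L x \<Longrightarrow> c \<in> L w \<Longrightarrow> Lift x w a = J x a (bt w)"
  using LR_direct Lift_R by blast

lemma Lift_same: "x \<le> w \<Longrightarrow> a \<in> L x \<Longrightarrow> a \<in> L w \<Longrightarrow> Lift x w a = a"
proof -
  assume h: "x \<le> w" "a \<in> L x" "a \<in> L w"
  have "le x (bt w) a" using ov_char[OF h(1) h(2,3) h(2)] h(3) by simp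
  moreover have "bt w \<in> L x" using bt_ov[OF h] .
  ultimately show ?thesis using Lift_direct[OF h(1,2,2,3)] J_eq_left[OF h(2)] by simp
qed

lemma LR_mono: "LiftR x w a r \<Longrightarrow> a \<in> L x \<Longrightarrow> b \<in> L x \<Longrightarrow> le x a b \<Longrightarrow> \<exists>r'. LiftR x w b r' \<and> le w r r'"
proof (induction arbitrary: b rule: LiftR.induct)
  case (LR_refl w a b) then show ?case using LiftR.LR_refl by blast
next
  case (LR_step x y w a r b)
  note sa = step_mem[OF LR_step.hyps(1) LR_step.prems(1)]
  note sb = step_mem[OF LR_step.hyps(1) LR_step.prems(2)]
  have xy: "x \<le> y" using cover_le[OF LR_step.hyps(1)] .
  have "le x (J x a (bt y)) (J x b (bt y))"
  proof (rule J_least[OF LR_step.prems(1) sa(3) sb(1)])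
    show "le x a (J x b (bt y))" using ltrans[OF LR_step.prems(1,2) sb(1) LR_step.prems(3) J_ub1[OF LR_step.prems(2) sa(3)]] .
    show "le x (bt y) (J x b (bt y))" using J_ub2[OF LR_step.prems(2) sa(3)] .
  qed
  then have "le y (J x a (bt y)) (J x b (bt y))" using ov_agree[OF xy sa(1,2) sb(1,2)] by simp
  then obtain r' where "LiftR y w (J x b (bt y)) r'" "le w r r'" using LR_step.IH[OF sa(2) sb(2)] by blast
  then show ?case using LiftR.LR_step[OF LR_step.hyps(1,2)] by blast
qed

lemma Lift_mono: "x \<le> w \<Longrightarrow> a \<in> L x \<Longrightarrow> b \<in> L x \<Longrightarrow> le x a b \<Longrightarrow> le w (Lift x w a) (Lift x w b)"
proof -
  assume h: "x \<le> w" "a \<in> L x" "b \<in> L x" "le x a b"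
  obtain r' where "LiftR x w b r'" "le w (Lift x w a) r'" using LR_mono[OF Lift_R[OF h(1,2)] h(2-4)] by blast
  then show ?thesis using Lift_eq h(3) by metis
qed

lemma LR_join: "LiftR x w a r \<Longrightarrow> a \<in> L x \<Longrightarrow> b \<in> L x \<Longrightarrow> \<exists>r'. LiftR x w b r' \<and> LiftR x w (J x a b) (J w r r')"
proof (induction arbitrary: b rule: LiftR.induct)
  case (LR_refl w a b) then show ?case using LiftR.LR_refl by blast
next
  case (LR_step x y w a r b)
  note sa = step_mem[OF LR_step.hyps(1) LR_step.prems(1)]
  note sb = step_mem[OF LR_step.hyps(1) LR_step.prems(2)]
  have xy: "x \<le> y" using cover_le[OF LR_step.hyps(1)] .
  have eq: "J x (J x a b) (bt y) = J y (J x a (bt y)) (J x b (bt y))"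
    using J_distrib[OF LR_step.prems(1,2) sa(3)] ov_join[OF xy sa(1,2) sb(1,2)] by simp
  obtain r' where r': "LiftR y w (J x b (bt y)) r'" "LiftR y w (J y (J x a (bt y)) (J x b (bt y))) (J w r r')"
    using LR_step.IH[OF sa(2) sb(2)] by blast
  have "LiftR x w (J x a b) (J w r r')" using LiftR.LR_step[OF LR_step.hyps(1,2)] r'(2) eq by simp
  moreover have "LiftR x w b r'" using LiftR.LR_step[OF LR_step.hyps(1,2) r'(1)] .
  ultimately show ?case by blast
qed

lemma Lift_join: "x \<le> w \<Longrightarrow> a \<in> L x \<Longrightarrow> b \<in> L x \<Longrightarrow> Lift x w (J x a b) = J w (Lift x w a) (Lift x w b)"
proof -
  assume h: "x \<le> w" "a \<in> L x" "b \<in> L x"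
  obtain r' where r': "LiftR x w b r'" "LiftR x w (J x a b) (J w (Lift x w a) r')"
    using LR_join[OF Lift_R[OF h(1,2)] h(2,3)] by blast
  have "Lift x w b = r'" using Lift_eq[OF r'(1) h(3)] .
  then show ?thesis using Lift_eq[OF r'(2) J_in[OF h(2,3)]] by simp
qed

lemma LR_bt: "LiftR x w a r \<Longrightarrow> a = bt x \<Longrightarrow> r = bt w"
proof (induction rule: LiftR.induct)
  case (LR_refl w a) then show ?case by simp
next
  case (LR_step x y w a r)
  have "J x (bt x) (bt y) = bt y" using J_eq_right[OF bt_in step_mem(3)[OF LR_step.hyps(1) bt_in] bt_le[OF step_mem(3)[OF LR_step.hyps(1) bt_in]]] .
  then show ?case using LR_step by simp
qed

lemma Lift_bt: "x \<le> w \<Longrightarrow> Lift x w (bt x) = bt w"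
  using LR_bt Lift_R bt_in by blast

lemma Lift_start: "a \<in> L x \<Longrightarrow> a \<in> L x' \<Longrightarrow> x \<le> w \<Longrightarrow> x' \<le> w \<Longrightarrow> Lift x w a = Lift x' w a"
proof -
  assume h: "a \<in> L x" "a \<in> L x'" "x \<le> w" "x' \<le> w"
  let ?m = "inf x x'"
  have m: "a \<in> L ?m" using cap_inf[OF h(1,2)] .
  have "Lift ?m w a = Lift x w (Lift ?m x a)" using Lift_comp[OF _ h(3) m] by simp
  also have "\<dots> = Lift x w a" using Lift_same[OF _ m h(1)] by simp
  finally have 1: "Lift ?m w a = Lift x w a" .
  have "Lift ?m w a = Lift x' w (Lift ?m x' a)" using Lift_comp[OF _ h(4) m] by simp
  also have "\<dots> = Lift x' w a" using Lift_same[OF _ m h(2)] by simp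
  finally show ?thesis using 1 by simp
qed

end

lemma join_the:
  assumes an: "\<And>x y. x \<in> A \<Longrightarrow> y \<in> A \<Longrightarrow> R x y \<Longrightarrow> R y x \<Longrightarrow> x = y"
    and j: "is_join A R a b c"
  shows "ljoin A R a b = c"
  unfolding ljoin_def
proof (rule the_equality)
  show "is_join A R a b c" by (rule j)
  fix c' assume j': "is_join A R a b c'"
  show "c' = c"
  proof (rule an)
    show "c' \<in> A" using j' unfolding is_join_def by simp
    show "c \<in> A" using j unfolding is_join_def by simp
    show "R c' c" using j' j unfolding is_join_def by blast
    show "R c c'" using j' j unfolding is_join_def by blast
  qed
qed

lemma meet_the:
  assumes an: "\<And>x y. x \<in> A \<Longrightarrow> y \<in> A \<Longrightarrow> R x y \<Longrightarrow> R y x \<Longrightarrow> x = y"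
    and j: "is_meet A R a b c"
  shows "lmeet A R a b = c"
  unfolding lmeet_def
proof (rule the_equality)
  show "is_meet A R a b c" by (rule j)
  fix c' assume j': "is_meet A R a b c'"
  show "c' = c"
  proof (rule an)
    show "c' \<in> A" using j' unfolding is_meet_def by simp
    show "c \<in> A" using j unfolding is_meet_def by simp
    show "R c' c" using j' j unfolding is_meet_def by blast
    show "R c c'" using j' j unfolding is_meet_def by blast
  qed
qed

context gsys
begin

abbreviation G where "G \<equiv> glued_le L le"
abbreviation C where "C \<equiv> glued_carrier L"

lemma C_iff: "a \<in> C \<longleftrightarrow> (\<exists>x. a \<in> L x)"
  unfolding glued_carrier_def by simp

lemma G_gen: "a \<in> L x \<Longrightarrow> b \<in> L x \<Longrightarrow> le x a b \<Longrightarrow> G a b"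
  unfolding glued_le_def by (rule tranclp.r_into_trancl) blast

lemma G_trans: "G a b \<Longrightarrow> G b c \<Longrightarrow> G a c"
  unfolding glued_le_def by (rule tranclp_trans)

lemma G_refl: "a \<in> L x \<Longrightarrow> G a a"
  using G_gen lrefl by blast

lemma G_mem: "G a b \<Longrightarrow> a \<in> C \<and> b \<in> C"
  unfolding glued_le_def
proof (induction rule: tranclp_induct)
  case (base y) then show ?case using C_iff by blast
next
  case (step y z) then show ?case using C_iff by blast
qed

lemma gen_alpha: "a \<in> L x \<Longrightarrow> b \<in> L x \<Longrightarrow> le x a b \<Longrightarrow> alpha a \<le> alpha b"
proof -
  assume h: "a \<in> L x" "b \<in> L x" "le x a b"
  have bx: "alpha b \<le> x" using alpha_le[OF h(2) h(2)] .
  have "b \<in> L (alpha b)" using alpha_mem[OF h(2)] .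
  then have "a \<in> L (alpha b)" using down_closed[OF bx _ h(2) h(1) h(3)] by simp
  then show ?thesis using alpha_le[OF h(1)] by simp
qed

definition Rel where
  "Rel a c \<longleftrightarrow> alpha a \<le> alpha c \<and> le (alpha c) (Lift (alpha a) (alpha c) a) c"

lemma gen_Rel:
  assumes h: "a \<in> L x" "c \<in> L x" "le x a c"
  shows "Rel a c"
proof -
  let ?m = "alpha c" and ?n = "alpha a"
  have nm: "?n \<le> ?m" using gen_alpha[OF h] .
  have an: "a \<in> L ?n" using alpha_mem[OF h(1)] .
  have cm: "c \<in> L ?m" using alpha_mem[OF h(2)] .
  have mx: "?m \<le> x" using alpha_le[OF h(2) h(2)] .
  have nx: "?n \<le> x" using alpha_le[OF h(1) h(1)] .
  let ?p = "Lift ?n ?m a"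
  have pm: "?p \<in> L ?m" using Lift_mem[OF nm an] .
  have "Lift ?m x ?p = Lift ?n x a" using Lift_comp[OF nm mx an] .
  also have "\<dots> = a" using Lift_same[OF nx an h(1)] .
  finally have 1: "Lift ?m x ?p = a" .
  have "Lift ?m x ?p = J ?m ?p (bt x)" using Lift_direct[OF mx pm cm h(2)] .
  then have q: "J ?m ?p (bt x) = a" using 1 by simp
  have btm: "bt x \<in> L ?m" using bt_ov[OF mx cm h(2)] .
  have qm: "J ?m ?p (bt x) \<in> L ?m" using J_in[OF pm btm] .
  have "le ?m (J ?m ?p (bt x)) c"
    using ov_agree[OF mx qm _ cm h(2)] h(1,3) q by simp
  then have "le ?m ?p c" using ltrans[OF pm qm cm J_ub1[OF pm btm]] by simp
  then show ?thesis unfolding Rel_def using nm by simp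
qed

lemma Rel_trans:
  assumes ab: "Rel a b" and bc: "Rel b c" and a: "a \<in> L xa" and b: "b \<in> L xb" and c: "c \<in> L xc"
  shows "Rel a c"
proof -
  let ?na = "alpha a" and ?nb = "alpha b" and ?nc = "alpha c"
  have 1: "?na \<le> ?nb" "le ?nb (Lift ?na ?nb a) b" using ab unfolding Rel_def by auto
  have 2: "?nb \<le> ?nc" "le ?nc (Lift ?nb ?nc b) c" using bc unfolding Rel_def by auto
  have an: "a \<in> L ?na" using alpha_mem[OF a] .
  have bn: "b \<in> L ?nb" using alpha_mem[OF b] .
  have cn: "c \<in> L ?nc" using alpha_mem[OF c] .
  have ac: "?na \<le> ?nc" using 1(1) 2(1) by (rule order_trans)
  have "Lift ?na ?nc a = Lift ?nb ?nc (Lift ?na ?nb a)" using Lift_comp[OF 1(1) 2(1) an] by simp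
  moreover have "le ?nc (Lift ?nb ?nc (Lift ?na ?nb a)) (Lift ?nb ?nc b)"
    using Lift_mono[OF 2(1) Lift_mem[OF 1(1) an] bn 1(2)] .
  ultimately have "le ?nc (Lift ?na ?nc a) (Lift ?nb ?nc b)" by simp
  then have "le ?nc (Lift ?na ?nc a) c"
    using ltrans[OF Lift_mem[OF ac an] Lift_mem[OF 2(1) bn] cn _ 2(2)] by simp
  then show ?thesis unfolding Rel_def using ac by simp
qed

lemma G_Rel: "G a c \<Longrightarrow> Rel a c"
  unfolding glued_le_def
proof (induction rule: tranclp_induct)
  case (base y) then show ?case using gen_Rel by blast
next
  case (step y z)
  then obtain x where x: "y \<in> L x" "z \<in> L x" "le x y z" by blast
  have "Rel y z" using gen_Rel[OF x] .
  moreover have "a \<in> C" using G_mem[of a y] step(1) unfolding glued_le_def by simp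
  ultimately show ?case using Rel_trans[OF step(3)] x C_iff by blast
qed

lemma LR_G: "LiftR x w a r \<Longrightarrow> a \<in> L x \<Longrightarrow> G a r"
proof (induction rule: LiftR.induct)
  case (LR_refl w a) then show ?case using G_refl by blast
next
  case (LR_step x y w a r)
  note sm = step_mem[OF LR_step.hyps(1) LR_step.prems(1)]
  have "G a (J x a (bt y))" using G_gen[OF LR_step.prems(1) sm(1) J_ub1[OF LR_step.prems(1) sm(3)]] .
  then show ?case using G_trans LR_step.IH[OF sm(2)] by blast
qed

lemma Rel_G: "a \<in> L x \<Longrightarrow> c \<in> L w \<Longrightarrow> x \<le> w \<Longrightarrow> le w (Lift x w a) c \<Longrightarrow> G a c"
proof -
  assume h: "a \<in> L x" "c \<in> L w" "x \<le> w" "le w (Lift x w a) c"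
  have "G a (Lift x w a)" using LR_G[OF Lift_R[OF h(3,1)] h(1)] .
  moreover have "G (Lift x w a) c" using G_gen[OF Lift_mem[OF h(3,1)] h(2,4)] .
  ultimately show ?thesis by (rule G_trans)
qed

lemma G_antisym: "G a c \<Longrightarrow> G c a \<Longrightarrow> a = c"
proof -
  assume h: "G a c" "G c a"
  have r1: "Rel a c" "Rel c a" using G_Rel h by auto
  have eq: "alpha a = alpha c" using r1 unfolding Rel_def by (simp add: order_antisym)
  obtain x y where xy: "a \<in> L x" "c \<in> L y" using G_mem[OF h(1)] C_iff by blast
  have am: "a \<in> L (alpha a)" using alpha_mem[OF xy(1)] .
  have cm: "c \<in> L (alpha a)" using alpha_mem[OF xy(2)] eq by simp
  have "le (alpha a) a c" using r1(1) Lift_refl[OF am] eq unfolding Rel_def by simp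
  moreover have "le (alpha a) c a" using r1(2) Lift_refl[OF cm] eq unfolding Rel_def by simp
  ultimately show ?thesis using lantisym[OF am cm] by simp
qed

definition jn where
  "jn a b = J (sup (alpha a) (alpha b)) (Lift (alpha a) (sup (alpha a) (alpha b)) a)
                                         (Lift (alpha b) (sup (alpha a) (alpha b)) b)"

lemma jn_mem: "a \<in> L x \<Longrightarrow> b \<in> L y \<Longrightarrow> jn a b \<in> L (sup (alpha a) (alpha b))"
  unfolding jn_def using J_in Lift_mem alpha_mem by simp

lemma jn_is_join:
  assumes a: "a \<in> L xa" and b: "b \<in> L xb"
  shows "is_join C G a b (jn a b)"
proof -
  let ?na = "alpha a" and ?nb = "alpha b"
  let ?z = "sup ?na ?nb"
  have an: "a \<in> L ?na" using alpha_mem[OF a] .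
  have bn: "b \<in> L ?nb" using alpha_mem[OF b] .
  have az: "?na \<le> ?z" and bz: "?nb \<le> ?z" by simp_all
  note la = Lift_mem[OF az an] and lb = Lift_mem[OF bz bn]
  have jz: "jn a b \<in> L ?z" using jn_mem[OF a b] .
  show ?thesis unfolding is_join_def
  proof (intro conjI ballI impI)
    show "jn a b \<in> C" using jz C_iff by blast
    show "G a (jn a b)" using Rel_G[OF an jz az] J_ub1[OF la lb] unfolding jn_def by simp
    show "G b (jn a b)" using Rel_G[OF bn jz bz] J_ub2[OF la lb] unfolding jn_def by simp
    fix d assume d: "d \<in> C" "G a d \<and> G b d"
    obtain xd where xd: "d \<in> L xd" using d(1) C_iff by blast
    let ?nd = "alpha d"
    have dn: "d \<in> L ?nd" using alpha_mem[OF xd] .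
    have ra: "?na \<le> ?nd" "le ?nd (Lift ?na ?nd a) d" using G_Rel d(2) unfolding Rel_def by auto
    have rb: "?nb \<le> ?nd" "le ?nd (Lift ?nb ?nd b) d" using G_Rel d(2) unfolding Rel_def by auto
    have zd: "?z \<le> ?nd" using ra(1) rb(1) by simp
    have "Lift ?z ?nd (jn a b) = J ?nd (Lift ?z ?nd (Lift ?na ?z a)) (Lift ?z ?nd (Lift ?nb ?z b))"
      unfolding jn_def using Lift_join[OF zd la lb] .
    also have "\<dots> = J ?nd (Lift ?na ?nd a) (Lift ?nb ?nd b)"
      using Lift_comp[OF az zd an] Lift_comp[OF bz zd bn] by simp
    finally have "le ?nd (Lift ?z ?nd (jn a b)) d"
      using J_least[OF Lift_mem[OF ra(1) an] Lift_mem[OF rb(1) bn] dn ra(2) rb(2)] by simp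
    then show "G (jn a b) d" using Rel_G[OF jz dn zd] by simp
  qed
qed

lemma ljoin_G: "a \<in> L xa \<Longrightarrow> b \<in> L xb \<Longrightarrow> ljoin C G a b = jn a b"
  using join_the[OF _ jn_is_join] G_antisym by blast

end

locale gphi = gsys L le for L :: "'i::lattice \<Rightarrow> 'a set" and le +
  fixes \<phi> :: "'i \<Rightarrow> 'a \<Rightarrow> 'b::lattice"
  assumes hom: "\<And>x. lattice_hom (L x) (le x) (\<phi> x)"
    and agree: "\<And>x y a. x \<prec> y \<Longrightarrow> a \<in> L x \<inter> L y \<Longrightarrow> \<phi> x a = \<phi> y a"
begin

lemma phi_J: "a \<in> L x \<Longrightarrow> b \<in> L x \<Longrightarrow> \<phi> x (J x a b) = sup (\<phi> x a) (\<phi> x b)"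
  using hom[of x] unfolding lattice_hom_def by blast

lemma phi_mono: "a \<in> L x \<Longrightarrow> b \<in> L x \<Longrightarrow> le x a b \<Longrightarrow> \<phi> x a \<le> \<phi> x b"
proof -
  assume h: "a \<in> L x" "b \<in> L x" "le x a b"
  have "\<phi> x b = sup (\<phi> x a) (\<phi> x b)" using phi_J[OF h(1,2)] J_eq_right[OF h] by simp
  then show ?thesis by (simp add: le_iff_sup)
qed

lemma phi_LR_same: "LiftR x w a r \<Longrightarrow> a \<in> L x \<Longrightarrow> a \<in> L w \<Longrightarrow> \<phi> w a = \<phi> x a"
proof (induction rule: LiftR.induct)
  case (LR_refl w a) then show ?case by simp
next
  case (LR_step x y w a r)
  have xy: "x \<le> y" using cover_le[OF LR_step.hyps(1)] .
  have ay: "a \<in> L y" using convex[OF xy LR_step.hyps(2) LR_step.prems] .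
  have "le x (bt y) a" using ov_char[OF xy LR_step.prems(1) ay LR_step.prems(1)] ay by simp
  then have eq: "J x a (bt y) = a" using J_eq_left[OF LR_step.prems(1) step_mem(3)[OF LR_step.hyps(1) LR_step.prems(1)]] by simp
  have "\<phi> w a = \<phi> y a" using LR_step.IH eq ay LR_step.prems(2) by simp
  also have "\<dots> = \<phi> x a" using agree[OF LR_step.hyps(1)] ay LR_step.prems(1) by simp
  finally show ?case .
qed

lemma phi_wd: "a \<in> L x \<Longrightarrow> a \<in> L y \<Longrightarrow> \<phi> x a = \<phi> y a"
proof -
  assume h: "a \<in> L x" "a \<in> L y"
  have m: "a \<in> L (inf x y)" using cap_inf[OF h] .
  have "\<phi> x a = \<phi> (inf x y) a" using phi_LR_same[OF Lift_R[OF _ m] m h(1)] by simp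
  moreover have "\<phi> y a = \<phi> (inf x y) a" using phi_LR_same[OF Lift_R[OF _ m] m h(2)] by simp
  ultimately show ?thesis by simp
qed

lemma phi_LR_mono: "LiftR x w a r \<Longrightarrow> a \<in> L x \<Longrightarrow> \<phi> x a \<le> \<phi> w r"
proof (induction rule: LiftR.induct)
  case (LR_refl w a) then show ?case by simp
next
  case (LR_step x y w a r)
  note sm = step_mem[OF LR_step.hyps(1) LR_step.prems(1)]
  have "\<phi> x a \<le> \<phi> x (J x a (bt y))" using phi_mono[OF LR_step.prems(1) sm(1) J_ub1[OF LR_step.prems(1) sm(3)]] .
  also have "\<dots> = \<phi> y (J x a (bt y))" using phi_wd[OF sm(1,2)] .
  also have "\<dots> \<le> \<phi> w r" using LR_step.IH[OF sm(2)] .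
  finally show ?case .
qed

lemma phi_bt_mono: "x \<le> w \<Longrightarrow> \<phi> x (bt x) \<le> \<phi> w (bt w)"
  using phi_LR_mono[OF Lift_R[OF _ bt_in] bt_in] Lift_bt by metis

lemma phi_LR: "LiftR x w a r \<Longrightarrow> a \<in> L x \<Longrightarrow> \<phi> w r = sup (\<phi> x a) (\<phi> w (bt w))"
proof (induction rule: LiftR.induct)
  case (LR_refl w a)
  have "\<phi> w (bt w) \<le> \<phi> w a" using phi_mono[OF bt_in LR_refl bt_le[OF LR_refl]] .
  then show ?case by (simp add: sup.absorb1)
next
  case (LR_step x y w a r)
  note sm = step_mem[OF LR_step.hyps(1) LR_step.prems(1)]
  have "\<phi> w r = sup (\<phi> y (J x a (bt y))) (\<phi> w (bt w))" using LR_step.IH[OF sm(2)] .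
  also have "\<phi> y (J x a (bt y)) = sup (\<phi> x a) (\<phi> x (bt y))"
    using phi_wd[OF sm(1,2)] phi_J[OF LR_step.prems(1) sm(3)] by simp
  also have "\<phi> x (bt y) = \<phi> y (bt y)" using phi_wd[OF sm(3) bt_in] .
  finally have 1: "\<phi> w r = sup (sup (\<phi> x a) (\<phi> y (bt y))) (\<phi> w (bt w))" .
  have 2: "\<phi> y (bt y) \<le> \<phi> w (bt w)" using phi_bt_mono[OF LR_step.hyps(2)] .
  show ?case unfolding 1 using 2 by (simp add: sup.assoc sup.absorb2)
qed

lemma phi_Lift: "x \<le> w \<Longrightarrow> a \<in> L x \<Longrightarrow> \<phi> w (Lift x w a) = sup (\<phi> x a) (\<phi> w (bt w))"
  using phi_LR Lift_R by blast

definition F where "F a = \<phi> (alpha a) a"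

lemma F_eq: "a \<in> L x \<Longrightarrow> F a = \<phi> x a"
  unfolding F_def using phi_wd alpha_mem by blast

lemma F_jn:
  assumes H: "\<And>x y. \<phi> (sup x y) (bt (sup x y)) \<le> sup (\<phi> x (bt x)) (\<phi> y (bt y))"
    and a: "a \<in> L xa" and b: "b \<in> L xb"
  shows "F (jn a b) = sup (F a) (F b)"
proof -
  let ?na = "alpha a" and ?nb = "alpha b"
  let ?z = "sup ?na ?nb"
  have an: "a \<in> L ?na" using alpha_mem[OF a] .
  have bn: "b \<in> L ?nb" using alpha_mem[OF b] .
  have az: "?na \<le> ?z" and bz: "?nb \<le> ?z" by simp_all
  note la = Lift_mem[OF az an] and lb = Lift_mem[OF bz bn]
  let ?P = "\<phi> ?na a" and ?Q = "\<phi> ?nb b" and ?B = "\<phi> ?z (bt ?z)"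
  have "F (jn a b) = \<phi> ?z (jn a b)" using F_eq[OF jn_mem[OF a b]] .
  also have "\<dots> = sup (sup ?P ?B) (sup ?Q ?B)"
    unfolding jn_def using phi_J[OF la lb] phi_Lift[OF az an] phi_Lift[OF bz bn] by simp
  also have "\<dots> = sup ?P ?Q"
  proof -
    have "?B \<le> sup (\<phi> ?na (bt ?na)) (\<phi> ?nb (bt ?nb))" using H .
    also have "\<dots> \<le> sup ?P ?Q"
      using phi_mono[OF bt_in an bt_le[OF an]] phi_mono[OF bt_in bn bt_le[OF bn]]
      by (rule sup_mono)
    finally have B: "?B \<le> sup ?P ?Q" .
    show ?thesis
    proof (rule order_antisym)
      show "sup (sup ?P ?B) (sup ?Q ?B) \<le> sup ?P ?Q" using B by simp
      show "sup ?P ?Q \<le> sup (sup ?P ?B) (sup ?Q ?B)" by (auto intro: le_supI1 le_supI2)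
    qed
  qed
  also have "\<dots> = sup (F a) (F b)" using F_eq[OF an] F_eq[OF bn] by simp
  finally show ?thesis .
qed

lemma F_mono: "G a b \<Longrightarrow> F a \<le> F b"
  unfolding glued_le_def
proof (induction rule: tranclp_induct)
  case (base y)
  then obtain x where "a \<in> L x" "y \<in> L x" "le x a y" by blast
  then show ?case using F_eq phi_mono by simp
next
  case (step y z)
  then obtain x where "y \<in> L x" "z \<in> L x" "le x y z" by blast
  then have "F y \<le> F z" using F_eq phi_mono by simp
  then show ?case using step(3) by (simp add: order_trans[of "F a" "F y" "F z"])
qed

lemma F_inj_G:
  assumes inj: "\<forall>x. inj_on (\<phi> x) (L x)"
  shows "G a c \<Longrightarrow> F a = F c \<Longrightarrow> a = c"
  unfolding glued_le_def
proof (induction rule: tranclp_induct)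
  case (base y)
  then obtain x where x: "a \<in> L x" "y \<in> L x" by blast
  then have "\<phi> x a = \<phi> x y" using base F_eq by simp
  then show ?case using inj x unfolding inj_on_def by blast
next
  case (step y z)
  then obtain x where x: "y \<in> L x" "z \<in> L x" "le x y z" by blast
  have 1: "F y \<le> F z" using x F_eq phi_mono by simp
  have 2: "F a \<le> F y" using F_mono step(1) unfolding glued_le_def by simp
  have "F a = F y" using 1 2 step(4) by (simp add: order_antisym)
  then have ay: "a = y" using step(3) by simp
  then have "\<phi> x y = \<phi> x z" using step(4) x F_eq by simp
  then have "y = z" using inj x unfolding inj_on_def by blast
  then show ?case using ay by simp
qed

lemma F_inj:
  assumes H: "\<And>x y. \<phi> (sup x y) (bt (sup x y)) \<le> sup (\<phi> x (bt x)) (\<phi> y (bt y))"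
    and inj: "\<forall>x. inj_on (\<phi> x) (L x)"
  shows "inj_on F C"
proof (rule inj_onI)
  fix a b assume ab: "a \<in> C" "b \<in> C" "F a = F b"
  obtain xa xb where a: "a \<in> L xa" and b: "b \<in> L xb" using ab C_iff by blast
  have j: "is_join C G a b (jn a b)" using jn_is_join[OF a b] .
  have Fj: "F (jn a b) = F a" "F (jn a b) = F b" using F_jn[OF H a b] ab(3) by simp_all
  have "G a (jn a b)" "G b (jn a b)" using j unfolding is_join_def by auto
  then have "a = jn a b" "b = jn a b" using F_inj_G[OF inj] Fj by auto
  then show "a = b" by simp
qed

lemma join_core:
  assumes H: "\<And>x y. \<phi> (sup x y) (bt (sup x y)) \<le> sup (\<phi> x (bt x)) (\<phi> y (bt y))"
    and a: "a \<in> C" and b: "b \<in> C"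
  shows "is_join C G a b (jn a b) \<and>
         (\<forall>x y z. a \<in> L x \<longrightarrow> b \<in> L y \<longrightarrow> jn a b \<in> L z \<longrightarrow> \<phi> z (jn a b) = sup (\<phi> x a) (\<phi> y b))"
proof -
  obtain xa xb where a: "a \<in> L xa" and b: "b \<in> L xb" using a b C_iff by blast
  show ?thesis using jn_is_join[OF a b] F_jn[OF H a b] F_eq by auto
qed

end

lemma mod_cover:
  assumes m: "modular_lattice TYPE('i::lattice)" and c: "inf a b \<prec> (b::'i)"
  shows "a \<prec> sup a b"
proof -
  have ml: "\<And>x y z::'i. x \<le> z \<Longrightarrow> sup x (inf y z) = inf (sup x y) z"
    using m unfolding modular_lattice_def by blast
  have lt: "inf a b < b" using c unfolding covers_def by simp
  have nc: "\<And>z. inf a b < z \<Longrightarrow> z < b \<Longrightarrow> False" using c unfolding covers_def by blast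
  have "a \<noteq> sup a b"
  proof
    assume "a = sup a b"
    then have "b \<le> a" by (metis sup.cobounded2)
    then have "inf a b = b" by (simp add: inf.absorb2)
    then show False using lt by simp
  qed
  then have 1: "a < sup a b" by (simp add: less_le)
  have 2: "\<not> (\<exists>m. a < m \<and> m < sup a b)"
  proof
    assume "\<exists>m. a < m \<and> m < sup a b"
    then obtain m where am: "a < m" "m < sup a b" by blast
    have e: "sup a (inf b m) = m"
      using ml[of a m b] am by (simp add: inf.absorb2 less_imp_le)
    have lo: "inf a b \<le> inf m b" using am(1) by (simp add: inf.coboundedI1 le_infI less_imp_le)
    have hi: "inf m b \<le> b" by simp
    have o: "inf m b = inf a b \<or> inf m b = b"
    proof (rule ccontr)
      assume "\<not> (inf m b = inf a b \<or> inf m b = b)"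
      then have "inf a b < inf m b" "inf m b < b" using lo hi by (auto simp: less_le)
      then show False using nc by blast
    qed
    consider "inf m b = inf a b" | "inf m b = b" using o by blast
    then show False
    proof cases
      case 1
      have "inf b m = inf a b" using 1 inf.commute[of b m] by simp
      then have "m = sup a (inf a b)" using e by simp
      then have "m = a" by simp
      then show False using am by simp
    next
      case 2
      have "inf b m = b" using 2 inf.commute[of b m] by simp
      then have "m = sup a b" using e by simp
      then show False using am by simp
    qed
  qed
  show ?thesis unfolding covers_def using 1 2 by blast
qed

context gphi
begin

lemma square:
  assumes p1: "p \<prec> q1" and p2: "p \<prec> q2" and r1: "q1 \<prec> r" and r2: "q2 \<prec> r"
    and i: "inf q1 q2 = p" and s: "sup q1 q2 = r"
  shows "\<phi> r (bt r) \<le> sup (\<phi> q1 (bt q1)) (\<phi> q2 (bt q2))"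
proof -
  have pq1: "p \<le> q1" using cover_le[OF p1] .
  have pq2: "p \<le> q2" using cover_le[OF p2] .
  have q1r: "q1 \<le> r" using cover_le[OF r1] .
  have br1: "bt r \<in> L q1" using step_mem(3)[OF r1 bt_in] .
  have br2: "bt r \<in> L q2" using step_mem(3)[OF r2 bt_in] .
  have brp: "bt r \<in> L p" using cap_inf[OF br1 br2] i by simp
  have b1: "bt q1 \<in> L p" using step_mem(3)[OF p1 bt_in] .
  have b2: "bt q2 \<in> L p" using step_mem(3)[OF p2 bt_in] .
  let ?e = "J p (bt q1) (bt q2)"
  have ep: "?e \<in> L p" using J_in[OF b1 b2] .
  have e1: "?e \<in> L q1" using up_closed[OF pq1 b1 bt_in ep J_ub1[OF b1 b2]] .
  have e2: "?e \<in> L q2" using up_closed[OF pq2 b2 bt_in ep J_ub2[OF b1 b2]] .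
  have er: "?e \<in> L r" using cap_sup[OF e1 e2] s by simp
  have "le r (bt r) ?e" using bt_le[OF er] .
  then have "le q1 (bt r) ?e" using ov_agree[OF q1r br1 bt_in e1 er] by simp
  then have le: "le p (bt r) ?e" using ov_agree[OF pq1 brp br1 ep e1] by simp
  have "\<phi> r (bt r) = \<phi> p (bt r)" using phi_wd[OF bt_in brp] .
  also have "\<dots> \<le> \<phi> p ?e" using phi_mono[OF brp ep le] .
  also have "\<dots> = sup (\<phi> p (bt q1)) (\<phi> p (bt q2))" using phi_J[OF b1 b2] .
  also have "\<dots> = sup (\<phi> q1 (bt q1)) (\<phi> q2 (bt q2))" using phi_wd[OF b1 bt_in] phi_wd[OF b2 bt_in] by simp
  finally show ?thesis .
qed

lemma Q_lemma:
  assumes m: "modular_lattice TYPE('i)"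
  shows "x \<prec> x' \<Longrightarrow> x \<le> c \<Longrightarrow> inf x' c = x \<Longrightarrow>
    \<phi> (sup x' c) (bt (sup x' c)) \<le> sup (\<phi> x' (bt x')) (\<phi> c (bt c))"
proof (induction c rule: wf_induct_rule[OF S_wf_less[OF S_fin]])
  case (1 c)
  have ml: "\<And>x y z::'i. x \<le> z \<Longrightarrow> sup x (inf y z) = inf (sup x y) z"
    using m unfolding modular_lattice_def by blast
  show ?case
  proof (cases "c = x")
    case True
    then have "sup x' c = x'" using cover_le[OF 1(2)] by (simp add: sup.absorb1)
    then show ?thesis by simp
  next
    case False
    then have "x < c" using 1(3) by simp
    then obtain c' where c': "x \<le> c'" "c' \<prec> c" using lower_cover_exists[OF S_fin] by blast
    have c'c: "c' < c" using cover_less[OF c'(2)] .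
    have ic': "inf x' c' = x"
    proof (rule order_antisym)
      have "inf x' c' \<le> inf x' c" using c'c by (simp add: inf.coboundedI2 less_imp_le)
      then show "inf x' c' \<le> x" using 1(4) by simp
      show "x \<le> inf x' c'" using c'(1) cover_le[OF 1(2)] by simp
    qed
    have IH: "\<phi> (sup x' c') (bt (sup x' c')) \<le> sup (\<phi> x' (bt x')) (\<phi> c' (bt c'))"
      using 1(1)[of c'] c'c 1(2) c'(1) ic' by simp
    define d' where "d' = sup x' c'"
    define r where "r = sup x' c"
    have cd': "c' \<prec> d'"
      using mod_cover[OF m, of c' x'] ic' 1(2) unfolding d'_def by (simp add: inf.commute sup.commute)
    have icd: "inf c d' = c'"
    proof -
      have "sup c' (inf x' c) = inf (sup c' x') c" using ml[of c' c x'] less_imp_le[OF c'c] by simp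
      moreover have "sup c' (inf x' c) = c'" using 1(4) c'(1) by (simp add: sup.absorb1)
      ultimately show ?thesis unfolding d'_def by (simp add: inf.commute sup.commute)
    qed
    have "c' \<le> sup x' c" using less_imp_le[OF c'c] by (simp add: le_supI2)
    then have scd: "sup c d' = r" unfolding d'_def r_def
      by (intro order_antisym) (auto intro: le_supI1 le_supI2)
    have cr: "c \<prec> r" using mod_cover[OF m, of c d'] icd cd' scd by simp
    have dr: "d' \<prec> r" using mod_cover[OF m, of d' c] icd c'(2) scd by (simp add: inf.commute sup.commute)
    have "\<phi> r (bt r) \<le> sup (\<phi> c (bt c)) (\<phi> d' (bt d'))"
      using square[OF c'(2) cd' cr dr icd scd] .
    also have "\<dots> \<le> sup (\<phi> c (bt c)) (sup (\<phi> x' (bt x')) (\<phi> c' (bt c')))"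
      using IH unfolding d'_def by (simp add: le_supI2)
    also have "\<dots> \<le> sup (\<phi> x' (bt x')) (\<phi> c (bt c))"
      using phi_bt_mono[OF less_imp_le[OF c'c]] by (simp add: le_supI1 le_supI2)
    finally show ?thesis unfolding r_def .
  qed
qed

lemma H_mod:
  assumes m: "modular_lattice TYPE('i)"
  shows "\<phi> (sup x y) (bt (sup x y)) \<le> sup (\<phi> x (bt x)) (\<phi> y (bt y))"
proof (induction x arbitrary: y rule: wf_induct_rule[OF S_wf_less[OF S_fin]])
  case (1 x)
  show ?case
  proof (cases "x \<le> y")
    case True
    then show ?thesis by (simp add: sup.absorb2)
  next
    case False
    have "inf x y \<le> x" by simp
    moreover have "inf x y \<noteq> x" using False inf.absorb_iff1[of x y] by simp
    ultimately have "inf x y < x" by (simp add: less_le)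
    then obtain x0 where x0: "inf x y \<le> x0" "x0 \<prec> x" using lower_cover_exists[OF S_fin] by blast
    have x0x: "x0 < x" using cover_less[OF x0(2)] .
    let ?c = "sup x0 y"
    have IH: "\<phi> ?c (bt ?c) \<le> sup (\<phi> x0 (bt x0)) (\<phi> y (bt y))" using 1(1)[of x0 y] x0x by simp
    have m0: "\<phi> x0 (bt x0) \<le> \<phi> x (bt x)" using phi_bt_mono[OF less_imp_le[OF x0x]] .
    show ?thesis
    proof (cases "x \<le> ?c")
      case True
      have a1: "sup x y \<le> ?c" using True by simp
      have a2: "?c \<le> sup x y" using less_imp_le[OF x0x] by (simp add: le_supI1)
      have "sup x y = ?c" using a1 a2 by (rule order_antisym)
      then show ?thesis using order_trans[OF IH sup_mono[OF m0 order_refl]] by simp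
    next
      case False
      have ixc: "inf x ?c = x0"
      proof -
        have lo: "x0 \<le> inf x ?c" using less_imp_le[OF x0x] by simp
        have ne: "inf x ?c \<noteq> x" using False inf.absorb_iff1[of x ?c] by simp
        have lt: "inf x ?c < x" using ne by (simp add: less_le)
        show ?thesis
        proof (rule ccontr)
          assume "inf x ?c \<noteq> x0"
          then have "x0 < inf x ?c" using lo by (simp add: less_le)
          then show False using lt x0(2) unfolding covers_def by blast
        qed
      qed
      have "x0 \<le> sup x y" using less_imp_le[OF x0x] by (simp add: le_supI1)
      then have sxc: "sup x ?c = sup x y"
        by (intro order_antisym) (auto intro: le_supI1 le_supI2)
      have "\<phi> (sup x ?c) (bt (sup x ?c)) \<le> sup (\<phi> x (bt x)) (\<phi> ?c (bt ?c))"
        using Q_lemma[OF m x0(2) _ ixc] by simp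
      also have "\<dots> \<le> sup (\<phi> x (bt x)) (sup (\<phi> x0 (bt x0)) (\<phi> y (bt y)))"
        using IH by (simp add: le_supI2)
      also have "\<dots> \<le> sup (\<phi> x (bt x)) (\<phi> y (bt y))"
        using m0 by (simp add: le_supI1 le_supI2)
      finally show ?thesis using sxc by simp
    qed
  qed
qed

end

lemma fin_length_type_dual:
  assumes "fin_length_type TYPE('i::order)"
  shows "fin_length_type TYPE('i dual)"
  unfolding fin_length_type_def
proof (intro allI impI)
  fix C :: "'i dual set"
  assume ch: "Complete_Partial_Order.chain (\<le>) C"
  have "Complete_Partial_Order.chain (\<le>) (undual ` C)"
  proof (rule chainI)
    fix x y assume "x \<in> undual ` C" "y \<in> undual ` C"
    then obtain x' y' where "x' \<in> C" "y' \<in> C" "x = undual x'" "y = undual y'" by blast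
    moreover have "x' \<le> y' \<or> y' \<le> x'" using ch \<open>x' \<in> C\<close> \<open>y' \<in> C\<close> unfolding Complete_Partial_Order.chain_def by blast
    ultimately show "x \<le> y \<or> y \<le> x" by (auto simp: dual_less_eq_iff)
  qed
  then have "finite (undual ` C)" using assms unfolding fin_length_type_def by blast
  moreover have "inj_on undual C" by (rule inj_on_subset[OF inj_undual]) simp
  ultimately show "finite C" using finite_imageD by blast
qed

lemma covers_dual: "((x::'i::order dual) \<prec> y) \<longleftrightarrow> (undual y \<prec> undual x)"
  unfolding covers_def
proof
  assume h: "x < y \<and> \<not> (\<exists>z. x < z \<and> z < y)"
  have "undual y < undual x" using h by (simp add: dual_less_iff)
  moreover have "\<not> (\<exists>z. undual y < z \<and> z < undual x)"
  proof
    assume "\<exists>z. undual y < z \<and> z < undual x"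
    then obtain z where "undual y < z" "z < undual x" by blast
    then have "x < dual z" "dual z < y" by (simp_all add: dual_less_iff)
    then show False using h by blast
  qed
  ultimately show "undual y < undual x \<and> \<not> (\<exists>z. undual y < z \<and> z < undual x)" by simp
next
  assume h: "undual y < undual x \<and> \<not> (\<exists>z. undual y < z \<and> z < undual x)"
  have "x < y" using h by (simp add: dual_less_iff)
  moreover have "\<not> (\<exists>z. x < z \<and> z < y)"
  proof
    assume "\<exists>z. x < z \<and> z < y"
    then obtain z where "x < z" "z < y" by blast
    then have "undual y < undual z" "undual z < undual x" by (simp_all add: dual_less_iff)
    then show False using h by blast
  qed
  ultimately show "x < y \<and> \<not> (\<exists>z. x < z \<and> z < y)" by simp
qed

lemma modular_dual:
  assumes "modular_lattice TYPE('i::lattice)"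
  shows "modular_lattice TYPE('i dual)"
  unfolding modular_lattice_def
proof (intro allI impI)
  fix x y z :: "'i dual"
  assume xz: "x \<le> z"
  have ml: "\<And>x y z::'i. x \<le> z \<Longrightarrow> sup x (inf y z) = inf (sup x y) z"
    using assms unfolding modular_lattice_def by blast
  have zx: "undual z \<le> undual x" using xz by (simp add: dual_less_eq_iff)
  have "undual (sup x (inf y z)) = inf (undual x) (sup (undual y) (undual z))" by simp
  also have "\<dots> = inf (sup (undual z) (undual y)) (undual x)" by (simp add: inf.commute sup.commute)
  also have "\<dots> = sup (undual z) (inf (undual y) (undual x))" using ml[OF zx] by simp
  also have "\<dots> = undual (inf (sup x y) z)" by (simp add: inf.commute sup.commute)
  finally show "sup x (inf y z) = inf (sup x y) z" by (simp add: dual_eq_iff)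
qed

lemma is_filter_flip: "is_filter A (\<lambda>x y. le y x) F = is_ideal A le F"
  unfolding is_filter_def is_ideal_def lmeet_flip[of A le] by simp
lemma is_ideal_flip: "is_ideal A (\<lambda>x y. le y x) F = is_filter A le F"
  unfolding is_filter_def is_ideal_def ljoin_flip[of A le] by simp

lemma glued_system_dual:
  assumes gs: "glued_system (L :: 'i::lattice \<Rightarrow> 'a set) le"
  shows "glued_system (\<lambda>x::'i dual. L (undual x)) (\<lambda>x a b. le (undual x) b a)"
proof -
  have s1: "\<forall>x. fin_length_lattice (L x) (le x)"
    using gs unfolding glued_system_def by (rule conjunct1)
  have s2: "\<forall>x y. x \<le> y \<and> L x \<inter> L y \<noteq> {} \<longrightarrow>
        is_filter (L x) (le x) (L x \<inter> L y) \<and> is_ideal (L y) (le y) (L x \<inter> L y)"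
    using gs unfolding glued_system_def by (rule conjunct1[OF conjunct2])
  have s3: "\<forall>x y. x \<le> y \<and> L x \<inter> L y \<noteq> {} \<longrightarrow>
        (\<forall>a\<in>L x \<inter> L y. \<forall>b\<in>L x \<inter> L y. le x a b \<longleftrightarrow> le y a b)"
    using gs unfolding glued_system_def by (rule conjunct1[OF conjunct2[OF conjunct2]])
  have s4: "\<forall>x y. x \<prec> y \<longrightarrow> L x \<inter> L y \<noteq> {}"
    using gs unfolding glued_system_def by (rule conjunct1[OF conjunct2[OF conjunct2[OF conjunct2]]])
  have s5: "\<forall>x y. L x \<inter> L y \<subseteq> L (inf x y) \<inter> L (sup x y)"
    using gs unfolding glued_system_def by (rule conjunct2[OF conjunct2[OF conjunct2[OF conjunct2]]])
  have h1: "\<forall>x::'i dual. fin_length_lattice (L (undual x)) (\<lambda>a b. le (undual x) b a)"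
    using s1 fl_flip by blast
  have h2: "\<forall>x y::'i dual. x \<le> y \<and> L (undual x) \<inter> L (undual y) \<noteq> {} \<longrightarrow>
        is_filter (L (undual x)) (\<lambda>a b. le (undual x) b a) (L (undual x) \<inter> L (undual y)) \<and>
        is_ideal (L (undual y)) (\<lambda>a b. le (undual y) b a) (L (undual x) \<inter> L (undual y))"
  proof (intro allI impI)
    fix x y :: "'i dual"
    assume h: "x \<le> y \<and> L (undual x) \<inter> L (undual y) \<noteq> {}"
    have "undual y \<le> undual x" using h by (simp add: dual_less_eq_iff)
    moreover have "L (undual y) \<inter> L (undual x) \<noteq> {}" using h by blast
    ultimately have "is_filter (L (undual y)) (le (undual y)) (L (undual y) \<inter> L (undual x)) \<and>
        is_ideal (L (undual x)) (le (undual x)) (L (undual y) \<inter> L (undual x))" using s2 by blast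
    then show "is_filter (L (undual x)) (\<lambda>a b. le (undual x) b a) (L (undual x) \<inter> L (undual y)) \<and>
        is_ideal (L (undual y)) (\<lambda>a b. le (undual y) b a) (L (undual x) \<inter> L (undual y))"
      unfolding is_filter_flip[of "L (undual x)" "le (undual x)"] is_ideal_flip[of "L (undual y)" "le (undual y)"]
      by (simp add: Int_commute)
  qed
  have h3: "\<forall>x y::'i dual. x \<le> y \<and> L (undual x) \<inter> L (undual y) \<noteq> {} \<longrightarrow>
        (\<forall>a\<in>L (undual x) \<inter> L (undual y). \<forall>b\<in>L (undual x) \<inter> L (undual y).
           le (undual x) b a \<longleftrightarrow> le (undual y) b a)"
  proof (intro allI impI ballI)
    fix x y :: "'i dual" and a b
    assume h: "x \<le> y \<and> L (undual x) \<inter> L (undual y) \<noteq> {}"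
      and a: "a \<in> L (undual x) \<inter> L (undual y)" and b: "b \<in> L (undual x) \<inter> L (undual y)"
    have "undual y \<le> undual x" using h by (simp add: dual_less_eq_iff)
    moreover have "L (undual y) \<inter> L (undual x) \<noteq> {}" using h by blast
    ultimately have "\<forall>a\<in>L (undual y) \<inter> L (undual x). \<forall>b\<in>L (undual y) \<inter> L (undual x).
        le (undual y) a b \<longleftrightarrow> le (undual x) a b" using s3 by blast
    then show "le (undual x) b a \<longleftrightarrow> le (undual y) b a" using a b by blast
  qed
  have h4: "\<forall>x y::'i dual. x \<prec> y \<longrightarrow> L (undual x) \<inter> L (undual y) \<noteq> {}"
    using s4 covers_dual by blast
  have h5: "\<forall>x y::'i dual. L (undual x) \<inter> L (undual y) \<subseteq> L (undual (inf x y)) \<inter> L (undual (sup x y))"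
    using s5 by (simp add: inf.commute sup.commute Int_commute)
  show ?thesis unfolding glued_system_def using h1 h2 h3 h4 h5 by (intro conjI) assumption+
qed

lemma lattice_hom_dual:
  assumes "lattice_hom A le f"
  shows "lattice_hom A (\<lambda>a b. le b a) (\<lambda>a. dual (f a))"
  using assms unfolding lattice_hom_def ljoin_flip[of A le] lmeet_flip[of A le] by simp

lemma glued_carrier_dual: "glued_carrier (\<lambda>x::'i dual. L (undual x)) = glued_carrier L"
  unfolding glued_carrier_def
proof (rule set_eqI)
  fix a
  show "a \<in> (\<Union>x::'i dual. L (undual x)) \<longleftrightarrow> a \<in> (\<Union>x. L x)"
  proof
    assume "a \<in> (\<Union>x::'i dual. L (undual x))" then show "a \<in> (\<Union>x. L x)" by blast
  next
    assume "a \<in> (\<Union>x. L x)"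
    then obtain x where "a \<in> L x" by blast
    then have "a \<in> L (undual (dual x))" by simp
    then show "a \<in> (\<Union>x::'i dual. L (undual x))" by blast
  qed
qed

lemma glued_le_dual: "glued_le (\<lambda>x::'i dual. L (undual x)) (\<lambda>x a b. le (undual x) b a) = (\<lambda>a b. glued_le L le b a)"
proof -
  have "(\<lambda>a b. \<exists>x::'i dual. a \<in> L (undual x) \<and> b \<in> L (undual x) \<and> le (undual x) b a)
        = (\<lambda>a b. \<exists>x. a \<in> L x \<and> b \<in> L x \<and> le x a b)\<inverse>\<inverse>"
  proof (intro ext iffI)
    fix a b assume "\<exists>x::'i dual. a \<in> L (undual x) \<and> b \<in> L (undual x) \<and> le (undual x) b a"
    then show "(\<lambda>a b. \<exists>x. a \<in> L x \<and> b \<in> L x \<and> le x a b)\<inverse>\<inverse> a b" by auto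
  next
    fix a b assume "(\<lambda>a b. \<exists>x. a \<in> L x \<and> b \<in> L x \<and> le x a b)\<inverse>\<inverse> a b"
    then obtain x where "b \<in> L x" "a \<in> L x" "le x b a" by auto
    then have "a \<in> L (undual (dual x)) \<and> b \<in> L (undual (dual x)) \<and> le (undual (dual x)) b a" by simp
    then show "\<exists>x::'i dual. a \<in> L (undual x) \<and> b \<in> L (undual x) \<and> le (undual x) b a" by blast
  qed
  note eq = this
  have "glued_le (\<lambda>x::'i dual. L (undual x)) (\<lambda>x a b. le (undual x) b a)
     = ((\<lambda>a b. \<exists>x. a \<in> L x \<and> b \<in> L x \<and> le x a b)\<inverse>\<inverse>)\<^sup>+\<^sup>+"
    by (simp only: glued_le_def eq)
  also have "\<dots> = ((\<lambda>a b. \<exists>x. a \<in> L x \<and> b \<in> L x \<and> le x a b)\<^sup>+\<^sup>+)\<inverse>\<inverse>"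
    by (rule tranclp_converse)
  also have "\<dots> = (\<lambda>a b. glued_le L le b a)"
    unfolding glued_le_def by (intro ext) (simp add: conversep_iff)
  finally show ?thesis .
qed


theorem theorem5p1:
  fixes L :: "'i::lattice \<Rightarrow> 'a set"
    and le :: "'i \<Rightarrow> 'a \<Rightarrow> 'a \<Rightarrow> bool"
    and \<phi> :: "'i \<Rightarrow> 'a \<Rightarrow> 'b::lattice"
  assumes S_fin: "fin_length_type TYPE('i)"
    and sys: "glued_system L le"
    and hom: "\<And>x. lattice_hom (L x) (le x) (\<phi> x)"
    and agree: "\<And>x y a. x \<prec> y \<Longrightarrow> a \<in> L x \<inter> L y \<Longrightarrow> \<phi> x a = \<phi> y a"
    and alt: "modular_lattice TYPE('i) \<or>
      (\<forall>x y. sup (\<phi> x (lbot (L x) (le x))) (\<phi> y (lbot (L y) (le y)))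
                = \<phi> (sup x y) (lbot (L (sup x y)) (le (sup x y))) \<and>
              inf (\<phi> x (ltop (L x) (le x))) (\<phi> y (ltop (L y) (le y)))
                = \<phi> (inf x y) (ltop (L (inf x y)) (le (inf x y))))"
  shows "\<exists>f. (\<forall>x. \<forall>a\<in>L x. f a = \<phi> x a) \<and>
             lattice_hom (glued_carrier L) (glued_le L le) f \<and>
             ((\<forall>x. inj_on (\<phi> x) (L x)) \<longrightarrow> inj_on f (glued_carrier L))"
proof -
  interpret P: gphi L le \<phi>
    by (rule gphi.intro[OF gsys.intro[OF S_fin sys]]) (rule gphi_axioms.intro[OF hom agree])
  have HP: "\<And>x y. \<phi> (sup x y) (lbot (L (sup x y)) (le (sup x y)))
      \<le> sup (\<phi> x (lbot (L x) (le x))) (\<phi> y (lbot (L y) (le y)))"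
  proof -
    fix x y
    show "\<phi> (sup x y) (lbot (L (sup x y)) (le (sup x y)))
      \<le> sup (\<phi> x (lbot (L x) (le x))) (\<phi> y (lbot (L y) (le y)))"
    proof (cases "modular_lattice TYPE('i)")
      case True then show ?thesis by (rule P.H_mod)
    next
      case False then show ?thesis using alt by simp
    qed
  qed
  let ?L' = "\<lambda>x::'i dual. L (undual x)"
  let ?le' = "\<lambda>x a b. le (undual x) b a"
  let ?\<phi>' = "\<lambda>x a. dual (\<phi> (undual x) a)"
  interpret D: gphi ?L' ?le' ?\<phi>'
  proof (rule gphi.intro[OF gsys.intro[OF fin_length_type_dual[OF S_fin] glued_system_dual[OF sys]]])
    show "gphi_axioms ?L' ?le' ?\<phi>'"
    proof (rule gphi_axioms.intro)
      fix x :: "'i dual"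
      show "lattice_hom (?L' x) (?le' x) (?\<phi>' x)" using lattice_hom_dual[OF hom] .
    next
      fix x y :: "'i dual" and a
      assume h: "x \<prec> y" "a \<in> ?L' x \<inter> ?L' y"
      have c: "undual y \<prec> undual x" using h(1) covers_dual[of x y] by simp
      have "\<phi> (undual y) a = \<phi> (undual x) a" using agree[OF c] h(2) by blast
      then show "?\<phi>' x a = ?\<phi>' y a" by simp
    qed
  qed
  have HD: "\<And>x y. ?\<phi>' (sup x y) (lbot (?L' (sup x y)) (?le' (sup x y)))
      \<le> sup (?\<phi>' x (lbot (?L' x) (?le' x))) (?\<phi>' y (lbot (?L' y) (?le' y)))"
  proof -
    fix x y :: "'i dual"
    show "?\<phi>' (sup x y) (lbot (?L' (sup x y)) (?le' (sup x y)))
      \<le> sup (?\<phi>' x (lbot (?L' x) (?le' x))) (?\<phi>' y (lbot (?L' y) (?le' y)))"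
    proof (cases "modular_lattice TYPE('i)")
      case True then show ?thesis by (rule D.H_mod[OF modular_dual])
    next
      case False
      then have e: "inf (\<phi> (undual x) (ltop (L (undual x)) (le (undual x))))
                        (\<phi> (undual y) (ltop (L (undual y)) (le (undual y))))
                = \<phi> (inf (undual x) (undual y)) (ltop (L (inf (undual x) (undual y))) (le (inf (undual x) (undual y))))"
        using alt by blast
      show ?thesis unfolding lbot_flip using e[symmetric] by simp
    qed
  qed
  have C_eq: "glued_carrier ?L' = glued_carrier L" by (rule glued_carrier_dual)
  have G_eq: "glued_le ?L' ?le' = (\<lambda>a b. glued_le L le b a)" by (rule glued_le_dual)
  show ?thesis
  proof (intro exI conjI)
    show "\<forall>x. \<forall>a\<in>L x. P.F a = \<phi> x a" using P.F_eq by blast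
    show "(\<forall>x. inj_on (\<phi> x) (L x)) \<longrightarrow> inj_on P.F (glued_carrier L)"
      using P.F_inj[OF HP] by blast
    show "lattice_hom (glued_carrier L) (glued_le L le) P.F"
      unfolding lattice_hom_def
    proof (intro ballI conjI)
      fix a b assume ab: "a \<in> glued_carrier L" "b \<in> glued_carrier L"
      obtain xa xb where a: "a \<in> L xa" and b: "b \<in> L xb" using ab P.C_iff by blast
      show "P.F (ljoin (glued_carrier L) (glued_le L le) a b) = sup (P.F a) (P.F b)"
        using P.ljoin_G[OF a b] P.F_jn[OF HP a b] by simp
      have dc: "is_join (glued_carrier ?L') (glued_le ?L' ?le') a b (D.jn a b) \<and>
         (\<forall>x y z. a \<in> ?L' x \<longrightarrow> b \<in> ?L' y \<longrightarrow> D.jn a b \<in> ?L' z \<longrightarrow>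
            ?\<phi>' z (D.jn a b) = sup (?\<phi>' x a) (?\<phi>' y b))"
        using D.join_core[OF HD] ab C_eq by simp
      let ?j = "D.jn a b"
      have ij: "is_join (glued_carrier L) (\<lambda>a b. glued_le L le b a) a b ?j"
        using dc C_eq G_eq by simp
      then have im: "is_meet (glued_carrier L) (glued_le L le) a b ?j"
        unfolding is_join_flip[of "glued_carrier L" "glued_le L le"] .
      have lm: "lmeet (glued_carrier L) (glued_le L le) a b = ?j"
        using meet_the[OF _ im] P.G_antisym by blast
      have "?j \<in> glued_carrier L" using im unfolding is_meet_def by simp
      then obtain z where z: "?j \<in> L z" using P.C_iff by blast
      have "?\<phi>' (dual z) ?j = sup (?\<phi>' (dual xa) a) (?\<phi>' (dual xb) b)"
      proof -
        have "\<forall>x y z'. a \<in> ?L' x \<longrightarrow> b \<in> ?L' y \<longrightarrow> ?j \<in> ?L' z' \<longrightarrow>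
            ?\<phi>' z' ?j = sup (?\<phi>' x a) (?\<phi>' y b)" using dc by (rule conjunct2)
        then have "a \<in> ?L' (dual xa) \<longrightarrow> b \<in> ?L' (dual xb) \<longrightarrow> ?j \<in> ?L' (dual z) \<longrightarrow>
            ?\<phi>' (dual z) ?j = sup (?\<phi>' (dual xa) a) (?\<phi>' (dual xb) b)" by blast
        then show ?thesis using a b z by simp
      qed
      then have "\<phi> z ?j = inf (\<phi> xa a) (\<phi> xb b)" by (simp add: dual_eq_iff)
      then show "P.F (lmeet (glued_carrier L) (glued_le L le) a b) = inf (P.F a) (P.F b)"
        using lm P.F_eq[OF z] P.F_eq[OF a] P.F_eq[OF b] by simp
    qed
  qed
qed


end
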